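(* Let $f:[-1,1]\to\mathbb{R}$ be sampled through the noisy oracle described in the context, with heteroskedastic noise. Let $N+1$ be the total sample budget, choose $\hat N\ll N$, let $x_i=\cos(i\pi/\hat N)$, $i=0,\dots,\hat N$, be the Chebyshev points, and let $\sigma_i=\sigma(x_i)$, $\boldsymbol{\sigma}=(\sigma_0,\dots,\sigma_{\hat N})$. Let $p_n$ be the polynomial approximant of degree $n$ produced by the known-variance weighted sampling algorithm described in the context. Suppose each $\epsilon_{x_i}$ is subgaussian with parameter $\sigma_i$. Then for $N$ large, for any fixed $x\in[-1,1]$ and $t>0$, $$\mathbb{P}\left[|p_n(x)-f(x)|>2t\frac{\|\boldsymbol{\sigma}\|_2}{\sqrt{N\hat N}}\sqrt{n+1}+\left(\sqrt{8(n+1)}+1\right)\|r_n\|_\infty\right]\le 2\exp\left(-\frac{t^2}{2}\right),$$ where $r_n=f-p_n^*$ and $p_n^*$ is the best uniform approximation of $f$ on $[-1,1]$ by polynomials of degree at most $n$.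
   Context: Noise model: a sample of $f$ at $x\in[-1,1]$ returns $y=f(x)+\epsilon_x$, where $\epsilon_x$ has mean $0$ and variance $\sigma(x)^2$ for some function $\sigma(x)\ge 0$; noises at distinct points are independent, and repeated samples taken at the same $x$ are independent. A random variable $X$ is called subgaussian with parameter $\sigma$ if $\mathbb{P}(|X|\ge t)\le 2\exp(-t^2/\sigma^2)$ for all $t\ge 0$ (the paper identifies $\sigma^2$ with the variance of $X$). Known-variance weighted sampling algorithm (input: the oracle, the budget $N+1$, and $\sigma(x)$): at each Chebyshev point $x_i$, $0\le i\le \hat N$, take $k_i\ge 1$ samples with $k_i$ proportional to $\sigma_i^2$, namely $k_i=N\sigma_i^2/\|\boldsymbol{\sigma}\|_2^2$ (ignoring rounding, which is justified for $N$ large), and let $y_i$ be the average of these $k_i$ samples. Let $\hat p_{\hat N}(x)=\sum_{j=0}^{\hat N}c_jT_j(x)$ be the unique polynomial of degree $\le\hat N$ with $\hat p_{\hat N}(x_i)=y_i$, where $T_j$ are Chebyshev polynomials. A truncation degree $n<\hat N$ is selected (by Mallows' $C_p$ criterion), and the output is the truncation $p_n(x)=\sum_{j=0}^{n}c_jT_j(x)$. *)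

theory Defs
  imports "HOL-Probability.Probability" "HOL-Computational_Algebra.Polynomial"
begin

fun cheb_T :: "nat \<Rightarrow> real \<Rightarrow> real" where
  "cheb_T 0 x = 1"
| "cheb_T (Suc 0) x = x"
| "cheb_T (Suc (Suc m)) x = 2 * x * cheb_T (Suc m) x - cheb_T m x"

definition cheb_pt :: "nat \<Rightarrow> nat \<Rightarrow> real" where
  "cheb_pt Nh i = cos (real i * pi / real Nh)"

definition cheb_interp_coeffs :: "nat \<Rightarrow> (nat \<Rightarrow> real) \<Rightarrow> nat \<Rightarrow> real" where
  "cheb_interp_coeffs Nh y = (THE c. (\<forall>i\<le>Nh. (\<Sum>j\<le>Nh. c j * cheb_T j (cheb_pt Nh i)) = y i)
                                     \<and> (\<forall>j>Nh. c j = 0))"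

definition trunc_approx :: "nat \<Rightarrow> nat \<Rightarrow> (nat \<Rightarrow> real) \<Rightarrow> real \<Rightarrow> real" where
  "trunc_approx Nh n y x = (\<Sum>j\<le>n. cheb_interp_coeffs Nh y j * cheb_T j x)"

definition sample_avg :: "(real \<Rightarrow> nat \<Rightarrow> 'a \<Rightarrow> real) \<Rightarrow> nat \<Rightarrow> (nat \<Rightarrow> nat) \<Rightarrow> nat \<Rightarrow> 'a \<Rightarrow> real" where
  "sample_avg eps Nh k i \<omega> = (\<Sum>j<k i. eps (cheb_pt Nh i) j \<omega>) / real (k i)"

definition sup_dist :: "(real \<Rightarrow> real) \<Rightarrow> real poly \<Rightarrow> real" where
  "sup_dist f p = Sup ((\<lambda>x. \<bar>f x - poly p x\<bar>) ` {-1..1})"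

definition best_approx :: "(real \<Rightarrow> real) \<Rightarrow> nat \<Rightarrow> real poly" where
  "best_approx f n = (SOME p. degree p \<le> n \<and> (\<forall>q. degree q \<le> n \<longrightarrow> sup_dist f p \<le> sup_dist f q))"

definition subgaussian :: "'a measure \<Rightarrow> ('a \<Rightarrow> real) \<Rightarrow> real \<Rightarrow> bool" where
  "subgaussian M X s = (\<forall>t\<ge>0. measure M {\<omega>\<in>space M. \<bar>X \<omega>\<bar> \<ge> t} \<le> 2 * exp (- (t^2) / s^2))"

end

theory Submission
  imports Defs
begin

definition rho :: "nat \<Rightarrow> nat \<Rightarrow> real" where
  "rho L i = (if i = 0 \<or> i = L then 1/2 else 1)"

lemma cheb_cos: "cheb_T j (cos th) = cos (real j * th)"
proof (induction j th rule: cheb_T.induct)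
  case (3 m x)
  have a: "real (Suc (Suc m)) * x = real (Suc m) * x + x" by (simp add: algebra_simps)
  have b: "real m * x = real (Suc m) * x - x" by (simp add: algebra_simps)
  have "cos (real (Suc (Suc m)) * x) = 2 * cos x * cos (real (Suc m) * x) - cos (real m * x)"
    unfolding a b cos_add cos_diff by (simp add: algebra_simps)
  moreover have "cheb_T (Suc (Suc m)) (cos x) = 2 * cos x * cheb_T (Suc m) (cos x) - cheb_T m (cos x)"
    by (rule cheb_T.simps)
  ultimately show ?case using 3 by simp
next
  case (1 x) then show ?case by simp
next
  case (2 x) then show ?case by simp
qed

lemma tele: "2 * sin (th/2) * (\<Sum>i\<le>K. cos (real i * th)) = sin ((real K + 1/2) * th) + sin (th/2)"
proof (induction K)
  case 0 then show ?case by simp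
next
  case (Suc K)
  have "sin ((real (Suc K) + 1/2) * th) - sin ((real K + 1/2) * th) = 2 * sin (th/2) * cos (real (Suc K) * th)"
  proof -
    have a: "(real (Suc K) + 1/2) * th = real (Suc K) * th + th/2" by (simp add: algebra_simps)
    have b: "(real K + 1/2) * th = real (Suc K) * th - th/2" by (simp add: algebra_simps)
    show ?thesis unfolding a b sin_add sin_diff by (simp add: algebra_simps)
  qed
  then show ?case using Suc by (simp add: algebra_simps)
qed

lemma sum_rho_split:
  assumes "L > 0"
  shows "(\<Sum>i\<le>L. rho L i * g i) = (\<Sum>i\<le>L. g i) - g 0 / 2 - g L / 2"
proof -
  have "(\<Sum>i\<le>L. rho L i * g i) = (\<Sum>i\<le>L. g i - (if i = 0 then g 0 / 2 else 0) - (if i = L then g L / 2 else 0))"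
    using assms by (intro sum.cong) (auto simp: rho_def)
  also have "\<dots> = (\<Sum>i\<le>L. g i) - g 0 / 2 - g L / 2"
    by (simp add: sum_subtractf)
  finally show ?thesis .
qed

lemma baseB:
  assumes "0 < m" "m < 2 * L"
  shows "(\<Sum>i\<le>L. rho L i * cos (real i * (real m * pi / real L))) = 0"
proof -
  define th where "th = real m * pi / real L"
  have L: "L > 0" using assms by simp
  have "sin (th/2) \<noteq> 0"
  proof
    assume "sin (th/2) = 0"
    then obtain k :: int where k: "th/2 = real_of_int k * pi" using sin_zero_iff_int2 by blast
    have "real m * pi = (2 * real_of_int k * real L) * pi" using k L by (simp add: th_def field_simps)
    hence "real m = 2 * real_of_int k * real L" by simp
    hence "real_of_int (int m) = real_of_int (2 * k * int L)" by simp
    hence e: "int m = 2 * k * int L" using of_int_eq_iff by blast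
    show False
    proof (cases "k \<ge> 1")
      case True
      hence "2 * int L \<le> 2 * k * int L" by (simp add: mult_right_mono)
      then show False using e assms(2) by linarith
    next
      case False
      hence "k \<le> 0" by simp
      hence "2 * k * int L \<le> 0" by (simp add: mult_nonpos_nonneg)
      then show False using e assms(1) by linarith
    qed
  qed
  have S: "2 * sin (th/2) * (\<Sum>i\<le>L. cos (real i * th)) = sin ((real L + 1/2) * th) + sin (th/2)"
    by (rule tele)
  have sL: "sin (real L * th) = 0"
  proof -
    have "real L * th = real m * pi" using L by (simp add: th_def)
    hence "real L * th = real_of_int (int m) * pi" by simp
    thus ?thesis using sin_zero_iff_int2 by blast
  qed
  have "2 * sin (th/2) * (\<Sum>i\<le>L. rho L i * cos (real i * th)) = 0"
  proof -
    have "2 * sin (th/2) * (\<Sum>i\<le>L. rho L i * cos (real i * th))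
        = 2 * sin (th/2) * (\<Sum>i\<le>L. cos (real i * th)) - sin (th/2) - sin (th/2) * cos (real L * th)"
      using L by (simp add: sum_rho_split algebra_simps)
    also have "\<dots> = sin ((real L + 1/2) * th) - sin (th/2) * cos (real L * th)" using S by simp
    also have "(real L + 1/2) * th = real L * th + th/2" by (simp add: algebra_simps)
    finally show ?thesis using sL by (simp add: sin_add)
  qed
  then show ?thesis using \<open>sin (th/2) \<noteq> 0\<close> by (simp add: th_def)
qed

definition cc :: "nat \<Rightarrow> nat \<Rightarrow> nat \<Rightarrow> real" where
  "cc L i j = cos (real i * real j * pi / real L)"

lemma cc_sym: "cc L i j = cc L j i"
  by (simp add: cc_def mult.commute)

lemma cheb_T_pt: "cheb_T j (cheb_pt L i) = cc L i j"
  by (simp add: cheb_pt_def cheb_cos cc_def mult.commute mult.left_commute)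

lemma sum_rho: "L > 0 \<Longrightarrow> (\<Sum>i\<le>L. rho L i) = real L"
  using sum_rho_split[of L "\<lambda>_. 1"] by simp

lemma rho_pos: "rho L i > 0" and rho_le1: "rho L i \<le> 1"
  by (auto simp: rho_def)

lemma baseB_full:
  assumes "L > 0" "m \<le> 2 * L"
  shows "(\<Sum>i\<le>L. rho L i * cos (real i * (real m * pi / real L))) = (if m = 0 \<or> m = 2 * L then real L else 0)"
proof (cases "m = 0 \<or> m = 2 * L")
  case True
  have "cos (real i * (real m * pi / real L)) = 1" for i
  proof (cases "m = 0")
    case False
    hence "m = 2 * L" using True by simp
    hence "real i * (real m * pi / real L) = 2 * real i * pi" using assms(1) by simp
    then show ?thesis by simp
  qed simp
  then show ?thesis using True sum_rho[OF assms(1)] by simp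
next
  case False
  then show ?thesis using baseB[of m L] assms by simp
qed

lemma ortho_aux:
  assumes "L > 0" "k \<le> j" "j \<le> L"
  shows "(\<Sum>i\<le>L. rho L i * cc L i j * cc L i k) = (if j = k then real L / (2 * rho L j) else 0)"
proof -
  define a where "a i = real i * real j * pi / real L" for i
  define b where "b i = real i * real k * pi / real L" for i
  have "cc L i j * cc L i k = (cos (real i * (real (j + k) * pi / real L)) + cos (real i * (real (j - k) * pi / real L))) / 2" for i
  proof -
    have "a i + b i = real i * (real (j + k) * pi / real L)" by (simp add: a_def b_def add_divide_distrib algebra_simps)
    moreover have "a i - b i = real i * (real (j - k) * pi / real L)" using assms(2) by (simp add: a_def b_def diff_divide_distrib algebra_simps of_nat_diff)
    moreover have "cos (a i) * cos (b i) = (cos (a i + b i) + cos (a i - b i)) / 2" by (simp add: cos_add cos_diff)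
    ultimately show ?thesis by (simp add: cc_def a_def b_def)
  qed
  hence "(\<Sum>i\<le>L. rho L i * cc L i j * cc L i k) =
     ((\<Sum>i\<le>L. rho L i * cos (real i * (real (j + k) * pi / real L))) + (\<Sum>i\<le>L. rho L i * cos (real i * (real (j - k) * pi / real L)))) / 2"
    by (simp add: sum_distrib_left sum.distrib add_divide_distrib ring_distribs sum_divide_distrib mult.assoc)
  also have "\<dots> = ((if j + k = 0 \<or> j + k = 2 * L then real L else 0) + (if j - k = 0 \<or> j - k = 2 * L then real L else 0)) / 2"
  proof -
    have e1: "(\<Sum>i\<le>L. rho L i * cos (real i * (real (j + k) * pi / real L))) = (if j + k = 0 \<or> j + k = 2 * L then real L else 0)"
      using assms by (intro baseB_full) auto
    have e2: "(\<Sum>i\<le>L. rho L i * cos (real i * (real (j - k) * pi / real L))) = (if j - k = 0 \<or> j - k = 2 * L then real L else 0)"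
      using assms by (intro baseB_full) auto
    show ?thesis by (simp only: e1 e2)
  qed
  also have "\<dots> = (if j = k then real L / (2 * rho L j) else 0)"
    using assms by (auto simp: rho_def)
  finally show ?thesis .
qed

lemma ortho:
  assumes "L > 0" "k \<le> L" "j \<le> L"
  shows "(\<Sum>i\<le>L. rho L i * cc L i j * cc L i k) = (if j = k then real L / (2 * rho L j) else 0)"
proof (cases "k \<le> j")
  case True then show ?thesis using ortho_aux assms by blast
next
  case False
  then have "(\<Sum>i\<le>L. rho L i * cc L i k * cc L i j) = (if k = j then real L / (2 * rho L k) else 0)"
    using ortho_aux[of L j k] assms by simp
  then show ?thesis by (simp add: mult_ac)
qed

definition icoef :: "nat \<Rightarrow> (nat \<Rightarrow> real) \<Rightarrow> nat \<Rightarrow> real" where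
  "icoef L y j = (if j \<le> L then (2 * rho L j / real L) * (\<Sum>i\<le>L. rho L i * y i * cc L i j) else 0)"

lemma ortho_sum:
  assumes "L > 0" "l \<le> L"
  shows "(\<Sum>i\<le>L. g i * (\<Sum>j\<le>L. rho L j * cc L j i * cc L j l)) = g l * real L / (2 * rho L l)"
proof -
  have "(\<Sum>i\<le>L. g i * (\<Sum>j\<le>L. rho L j * cc L j i * cc L j l)) = (\<Sum>i\<le>L. g i * (if i = l then real L / (2 * rho L i) else 0))"
    using assms by (intro sum.cong refl) (simp add: ortho)
  also have "\<dots> = g l * real L / (2 * rho L l)"
    using assms by (simp add: if_distrib cong: if_cong)
  finally show ?thesis .
qed

lemma interp_ok:
  assumes "L > 0" "l \<le> L"
  shows "(\<Sum>j\<le>L. icoef L y j * cc L l j) = y l"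
proof -
  have "(\<Sum>j\<le>L. icoef L y j * cc L l j) = (\<Sum>j\<le>L. (\<Sum>i\<le>L. (2 / real L) * (rho L i * y i) * (rho L j * cc L j i * cc L j l)))"
    by (intro sum.cong refl) (simp add: icoef_def sum_distrib_left sum_distrib_right cc_sym mult_ac)
  also have "\<dots> = (\<Sum>i\<le>L. (2 / real L) * (rho L i * y i) * (\<Sum>j\<le>L. rho L j * cc L j i * cc L j l))"
    by (subst sum.swap) (simp add: sum_distrib_left)
  also have "\<dots> = (2 / real L) * (rho L l * y l) * real L / (2 * rho L l)"
    using ortho_sum[OF assms, of "\<lambda>i. (2 / real L) * (rho L i * y i)"] by simp
  also have "\<dots> = y l" using assms rho_pos[of L l] by (simp add: field_simps)
  finally show ?thesis .
qed

lemma interp_unique: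
  assumes "L > 0" "\<forall>i\<le>L. (\<Sum>j\<le>L. d j * cc L i j) = 0" "k \<le> L"
  shows "d k = 0"
proof -
  have "0 = (\<Sum>i\<le>L. rho L i * cc L i k * (\<Sum>j\<le>L. d j * cc L i j))"
    using assms(2) by simp
  also have "\<dots> = (\<Sum>j\<le>L. d j * (\<Sum>i\<le>L. rho L i * cc L i j * cc L i k))"
    by (simp add: sum_distrib_left sum_distrib_right mult_ac) (subst sum.swap, simp)
  also have "\<dots> = d k * real L / (2 * rho L k)"
    using ortho_sum[OF assms(1,3), of d] by (simp add: cc_sym)
  finally show ?thesis using assms rho_pos[of L k] by simp
qed

lemma cheb_interp_coeffs_eq:
  assumes "L > 0"
  shows "cheb_interp_coeffs L y = icoef L y"
  unfolding cheb_interp_coeffs_def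
proof (rule the_equality)
  show "(\<forall>i\<le>L. (\<Sum>j\<le>L. icoef L y j * cheb_T j (cheb_pt L i)) = y i) \<and> (\<forall>j>L. icoef L y j = 0)"
    using interp_ok[OF assms] by (simp add: cheb_T_pt icoef_def)
next
  fix c assume c: "(\<forall>i\<le>L. (\<Sum>j\<le>L. c j * cheb_T j (cheb_pt L i)) = y i) \<and> (\<forall>j>L. c j = 0)"
  show "c = icoef L y"
  proof
    fix k
    show "c k = icoef L y k"
    proof (cases "k \<le> L")
      case True
      have "\<forall>i\<le>L. (\<Sum>j\<le>L. (c j - icoef L y j) * cc L i j) = 0"
        using c interp_ok[OF assms] by (simp add: cheb_T_pt left_diff_distrib sum_subtractf)
      from interp_unique[OF assms this True] show ?thesis by simp
    next
      case False then show ?thesis using c by (simp add: icoef_def)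
    qed
  qed
qed

lemma rho_nz [simp]: "rho L i \<noteq> 0"
  using rho_pos[of L i] by simp

definition wt :: "nat \<Rightarrow> nat \<Rightarrow> real \<Rightarrow> nat \<Rightarrow> real" where
  "wt L n x i = (2 / real L) * rho L i * (\<Sum>j\<le>n. rho L j * cc L i j * cheb_T j x)"

lemma trunc_weights:
  assumes "L > 0" "n \<le> L"
  shows "trunc_approx L n y x = (\<Sum>i\<le>L. y i * wt L n x i)"
proof -
  have "trunc_approx L n y x = (\<Sum>j\<le>n. (\<Sum>i\<le>L. y i * ((2 / real L) * rho L i * (rho L j * cc L i j * cheb_T j x))))"
    unfolding trunc_approx_def cheb_interp_coeffs_eq[OF assms(1)]
    using assms(2) by (intro sum.cong refl) (auto simp: icoef_def sum_distrib_left sum_distrib_right mult_ac)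
  also have "\<dots> = (\<Sum>i\<le>L. y i * wt L n x i)"
    by (subst sum.swap) (simp add: wt_def sum_distrib_left)
  finally show ?thesis .
qed

lemma quad_form:
  assumes "L > 0" "n \<le> L"
  shows "(\<Sum>i\<le>L. rho L i * (\<Sum>j\<le>n. a j * cc L i j)^2) = (\<Sum>j\<le>n. (a j)^2 * real L / (2 * rho L j))"
proof -
  have "(\<Sum>i\<le>L. rho L i * (\<Sum>j\<le>n. a j * cc L i j)^2) = (\<Sum>i\<le>L. \<Sum>j\<le>n. \<Sum>k\<le>n. a j * a k * (rho L i * cc L i j * cc L i k))"
    by (simp add: power2_eq_square sum_product sum_distrib_left mult_ac)
  also have "\<dots> = (\<Sum>j\<le>n. \<Sum>k\<le>n. a j * a k * (\<Sum>i\<le>L. rho L i * cc L i j * cc L i k))"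
    by (subst sum.swap) (simp add: sum_distrib_left sum.swap[of _ "{..L}"])
  also have "\<dots> = (\<Sum>j\<le>n. \<Sum>k\<le>n. a j * a k * (if j = k then real L / (2 * rho L j) else 0))"
    using assms by (intro sum.cong refl) (simp add: ortho)
  also have "\<dots> = (\<Sum>j\<le>n. (a j)^2 * real L / (2 * rho L j))"
    by (intro sum.cong refl) (simp add: if_distrib power2_eq_square cong: if_cong)
  finally show ?thesis .
qed

lemma cheb_T_bound: "\<bar>x\<bar> \<le> 1 \<Longrightarrow> \<bar>cheb_T j x\<bar> \<le> 1"
proof -
  assume "\<bar>x\<bar> \<le> 1"
  hence "x = cos (arccos x)" by simp
  hence "cheb_T j x = cos (real j * arccos x)" by (metis cheb_cos)
  thus ?thesis by simp
qed

lemma wt_sq_bound: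
  assumes "n < L" "\<bar>x\<bar> \<le> 1"
  shows "(\<Sum>i\<le>L. (wt L n x i)^2 / rho L i) \<le> 2 * (real n + 1) / real L"
proof -
  have L: "L > 0" using assms by simp
  have "(\<Sum>i\<le>L. (wt L n x i)^2 / rho L i) = (4 / (real L)^2) * (\<Sum>i\<le>L. rho L i * (\<Sum>j\<le>n. (rho L j * cheb_T j x) * cc L i j)^2)"
  proof -
    have "(wt L n x i)^2 / rho L i = (4/(real L)^2) * (rho L i * (\<Sum>j\<le>n. (rho L j * cheb_T j x) * cc L i j)^2)" for i
    proof -
      have S: "(\<Sum>j\<le>n. rho L j * cc L i j * cheb_T j x) = (\<Sum>j\<le>n. (rho L j * cheb_T j x) * cc L i j)"
        by (simp add: mult_ac)
      show ?thesis using rho_pos[of L i] by (simp add: wt_def S power2_eq_square field_simps)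
    qed
    then show ?thesis by (simp add: sum_distrib_left)
  qed
  also have "\<dots> = (4 / (real L)^2) * (\<Sum>j\<le>n. (rho L j * cheb_T j x)^2 * real L / (2 * rho L j))"
    using quad_form[OF L, of n] assms by simp
  also have "\<dots> = (2 / real L) * (\<Sum>j\<le>n. rho L j * (cheb_T j x)^2)"
  proof -
    have "(4/(real L)^2) * ((rho L j * cheb_T j x)^2 * real L / (2 * rho L j)) = (2/real L) * (rho L j * (cheb_T j x)^2)" for j
      using L by (simp add: field_simps power2_eq_square)
    then show ?thesis by (simp add: sum_distrib_left)
  qed
  also have "\<dots> \<le> (2 / real L) * (\<Sum>j\<le>n. 1)"
  proof (intro mult_left_mono sum_mono)
    fix j
    have "(cheb_T j x)^2 \<le> 1" using cheb_T_bound[OF assms(2)] by (simp add: abs_square_le_1)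
    then show "rho L j * (cheb_T j x)^2 \<le> 1" using rho_le1[of L j] rho_pos[of L j]
      by (metis mult_le_one zero_le_power2 less_imp_le)
  qed simp
  also have "\<dots> = 2 * (real n + 1) / real L" by simp
  finally show ?thesis .
qed

lemma reproduce_T:
  assumes "n < L" "k \<le> n"
  shows "(\<Sum>i\<le>L. cc L i k * wt L n x i) = cheb_T k x"
proof -
  have L: "L > 0" using assms by simp
  have "(\<Sum>i\<le>L. cc L i k * wt L n x i) = (\<Sum>j\<le>n. (2 / real L) * rho L j * cheb_T j x * (\<Sum>i\<le>L. rho L i * cc L i j * cc L i k))"
  proof -
    have "(\<Sum>i\<le>L. cc L i k * wt L n x i) = (\<Sum>i\<le>L. \<Sum>j\<le>n. (2 / real L) * rho L j * cheb_T j x * (rho L i * cc L i j * cc L i k))"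
      unfolding wt_def by (intro sum.cong refl) (simp add: sum_distrib_left mult_ac)
    also have "\<dots> = (\<Sum>j\<le>n. \<Sum>i\<le>L. (2 / real L) * rho L j * cheb_T j x * (rho L i * cc L i j * cc L i k))"
      by (rule sum.swap)
    finally show ?thesis by (simp add: sum_distrib_left)
  qed
  also have "\<dots> = (\<Sum>j\<le>n. (if j = k then cheb_T k x else 0))"
    using assms rho_pos by (intro sum.cong refl) (auto simp: ortho)
  also have "\<dots> = cheb_T k x" using assms by simp
  finally show ?thesis .
qed

definition inV :: "nat \<Rightarrow> (real \<Rightarrow> real) \<Rightarrow> bool" where
  "inV n g \<longleftrightarrow> (\<exists>a. \<forall>x. g x = (\<Sum>j\<le>n. a j * cheb_T j x))"

lemma inV_T: "j \<le> n \<Longrightarrow> inV n (cheb_T j)"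
  unfolding inV_def
proof (rule exI[of _ "\<lambda>l. if l = j then 1 else 0"], rule allI)
  fix x assume j: "j \<le> n"
  have "(\<Sum>l\<le>n. (if l = j then 1 else 0) * cheb_T l x) = (\<Sum>l\<le>n. (if l = j then cheb_T l x else 0))"
    by (intro sum.cong) auto
  also have "\<dots> = cheb_T j x" using j by simp
  finally show "cheb_T j x = (\<Sum>l\<le>n. (if l = j then 1 else 0) * cheb_T l x)" by simp
qed

lemma inV_add: "inV n g \<Longrightarrow> inV n h \<Longrightarrow> inV n (\<lambda>x. g x + h x)"
  unfolding inV_def
proof (elim exE)
  fix a b assume a: "\<forall>x. g x = (\<Sum>j\<le>n. a j * cheb_T j x)" and b: "\<forall>x. h x = (\<Sum>j\<le>n. b j * cheb_T j x)"
  show "\<exists>c. \<forall>x. g x + h x = (\<Sum>j\<le>n. c j * cheb_T j x)"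
    by (rule exI[of _ "\<lambda>j. a j + b j"]) (simp add: a b distrib_right sum.distrib)
qed

lemma inV_scale: "inV n g \<Longrightarrow> inV n (\<lambda>x. c * g x)"
  unfolding inV_def
proof (elim exE)
  fix a assume a: "\<forall>x. g x = (\<Sum>j\<le>n. a j * cheb_T j x)"
  show "\<exists>b. \<forall>x. c * g x = (\<Sum>j\<le>n. b j * cheb_T j x)"
    by (rule exI[of _ "\<lambda>j. c * a j"]) (simp add: a sum_distrib_left mult_ac)
qed

lemma inV_zero: "inV n (\<lambda>x. 0)"
  unfolding inV_def by (rule exI[of _ "\<lambda>_. 0"]) simp

lemma inV_sum: "finite A \<Longrightarrow> (\<And>k. k \<in> A \<Longrightarrow> inV n (g k)) \<Longrightarrow> inV n (\<lambda>x. \<Sum>k\<in>A. g k x)"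
proof (induction A rule: finite_induct)
  case empty then show ?case by (simp add: inV_zero)
next
  case (insert a A)
  then show ?case by (simp add: inV_add)
qed

lemma inV_mono: "inV n g \<Longrightarrow> n \<le> m \<Longrightarrow> inV m g"
  unfolding inV_def
proof (elim exE)
  fix a assume a: "\<forall>x. g x = (\<Sum>j\<le>n. a j * cheb_T j x)" and nm: "n \<le> m"
  show "\<exists>b. \<forall>x. g x = (\<Sum>j\<le>m. b j * cheb_T j x)"
  proof (rule exI[of _ "\<lambda>j. if j \<le> n then a j else 0"], rule allI)
    fix x
    have "(\<Sum>j\<le>m. (if j \<le> n then a j else 0) * cheb_T j x) = (\<Sum>j\<le>n. (if j \<le> n then a j else 0) * cheb_T j x)"
      using nm by (intro sum.mono_neutral_right) auto
    then show "g x = (\<Sum>j\<le>m. (if j \<le> n then a j else 0) * cheb_T j x)" using a by simp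
  qed
qed

lemma inV_xT: "inV (Suc j) (\<lambda>x. x * cheb_T j x)"
proof (cases j)
  case 0
  have "cheb_T (Suc 0) = (\<lambda>x. x)" by (rule ext) simp
  moreover have "(\<lambda>x. x * cheb_T j x) = (\<lambda>x. x)" using 0 by (intro ext) simp
  ultimately show ?thesis using inV_T[of 1 1] 0 by simp
next
  case (Suc i)
  have "x * cheb_T j x = (1/2) * cheb_T (Suc (Suc i)) x + (1/2) * cheb_T i x" for x
    using Suc by (simp add: field_simps)
  moreover have "inV (Suc j) (\<lambda>x. (1/2) * cheb_T (Suc (Suc i)) x + (1/2) * cheb_T i x)"
    using Suc by (intro inV_add inV_scale inV_T) auto
  ultimately show ?thesis by simp
qed

lemma inV_xmul: "inV n g \<Longrightarrow> inV (Suc n) (\<lambda>x. x * g x)"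
proof -
  assume "inV n g"
  then obtain a where a: "\<forall>x. g x = (\<Sum>j\<le>n. a j * cheb_T j x)" unfolding inV_def by blast
  have "inV (Suc n) (\<lambda>x. \<Sum>j\<le>n. a j * (x * cheb_T j x))"
    by (intro inV_sum inV_scale inV_mono[OF inV_xT]) auto
  then show ?thesis using a by (simp add: sum_distrib_left mult_ac)
qed

lemma inV_pow: "inV m (\<lambda>x. x ^ m)"
proof (induction m)
  case 0
  have "cheb_T 0 = (\<lambda>x. 1)" by (rule ext) simp
  then show ?case using inV_T[of 0 0] by simp
next
  case (Suc m) then show ?case using inV_xmul[OF Suc] by simp
qed

lemma inV_poly: "degree p \<le> n \<Longrightarrow> inV n (poly p)"
proof -
  assume d: "degree p \<le> n"
  have "inV n (\<lambda>x. \<Sum>i\<le>degree p. coeff p i * x ^ i)"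
    using d by (intro inV_sum inV_scale inV_mono[OF inV_pow]) auto
  then show ?thesis by (simp add: poly_altdef[abs_def])
qed

lemma reproduce:
  assumes "inV n g" "n < L"
  shows "(\<Sum>i\<le>L. g (cheb_pt L i) * wt L n x i) = g x"
proof -
  obtain a where a: "\<forall>x. g x = (\<Sum>j\<le>n. a j * cheb_T j x)" using assms(1) unfolding inV_def by blast
  have "(\<Sum>i\<le>L. g (cheb_pt L i) * wt L n x i) = (\<Sum>i\<le>L. \<Sum>j\<le>n. a j * (cc L i j * wt L n x i))"
    by (intro sum.cong refl) (simp add: a cheb_T_pt sum_distrib_right sum_distrib_left mult_ac)
  also have "\<dots> = (\<Sum>j\<le>n. a j * (\<Sum>i\<le>L. cc L i j * wt L n x i))"
    by (subst sum.swap) (simp add: sum_distrib_left)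
  also have "\<dots> = (\<Sum>j\<le>n. a j * cheb_T j x)"
    using assms(2) by (intro sum.cong refl) (simp add: reproduce_T)
  finally show ?thesis using a by simp
qed

lemma coef_formula:
  assumes "\<forall>x. g x = (\<Sum>j\<le>n. a j * cheb_T j x)" "n < L" "k \<le> n"
  shows "(\<Sum>i\<le>L. rho L i * g (cheb_pt L i) * cc L i k) = a k * real L / (2 * rho L k)"
proof -
  have L: "L > 0" using assms by simp
  have "(\<Sum>i\<le>L. rho L i * g (cheb_pt L i) * cc L i k) = (\<Sum>i\<le>L. \<Sum>j\<le>n. a j * (rho L i * cc L i j * cc L i k))"
    by (intro sum.cong refl) (simp add: assms(1) cheb_T_pt sum_distrib_right sum_distrib_left mult_ac)
  also have "\<dots> = (\<Sum>j\<le>n. a j * (\<Sum>i\<le>L. rho L i * cc L i j * cc L i k))"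
    by (subst sum.swap) (simp add: sum_distrib_left)
  also have "\<dots> = (\<Sum>j\<le>n. (if j = k then a k * real L / (2 * rho L k) else 0))"
    using assms by (intro sum.cong refl) (auto simp: ortho)
  also have "\<dots> = a k * real L / (2 * rho L k)" using assms by simp
  finally show ?thesis .
qed

lemma coef_bound:
  assumes "\<forall>x. g x = (\<Sum>j\<le>n. a j * cheb_T j x)" "k \<le> n"
    and "\<forall>y\<in>{-1..1}. \<bar>g y\<bar> \<le> B"
  shows "\<bar>a k\<bar> \<le> 2 * B"
proof -
  define L where "L = Suc n"
  have L: "n < L" "L > 0" by (auto simp: L_def)
  have pt: "cheb_pt L i \<in> {-1..1}" for i by (simp add: cheb_pt_def)
  have "\<bar>g 0\<bar> \<le> B" using assms(3) by simp
  hence B: "B \<ge> 0" by linarith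
  have "\<bar>a k\<bar> * real L / (2 * rho L k) = \<bar>\<Sum>i\<le>L. rho L i * g (cheb_pt L i) * cc L i k\<bar>"
    using coef_formula[OF assms(1) L(1) assms(2)] rho_pos[of L k] by (simp add: abs_mult)
  also have "\<dots> \<le> (\<Sum>i\<le>L. rho L i * B)"
  proof (rule order_trans[OF sum_abs], intro sum_mono)
    fix i
    have "\<bar>cc L i k\<bar> \<le> 1" by (simp add: cc_def)
    hence "\<bar>g (cheb_pt L i)\<bar> * \<bar>cc L i k\<bar> \<le> B * 1"
      using assms(3) pt B by (intro mult_mono) auto
    then show "\<bar>rho L i * g (cheb_pt L i) * cc L i k\<bar> \<le> rho L i * B"
      using rho_pos[of L i] by (simp add: abs_mult mult.assoc mult_left_mono)
  qed
  also have "\<dots> = real L * B" using sum_rho[OF L(2)] by (simp add: sum_distrib_right[symmetric])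
  finally have "\<bar>a k\<bar> * real L / (2 * rho L k) \<le> real L * B" .
  hence "\<bar>a k\<bar> \<le> 2 * rho L k * B" using L rho_pos[of L k] by (simp add: field_simps)
  also have "\<dots> \<le> 2 * B" using rho_le1[of L k] B mult_right_mono[of "rho L k" 1 B] by simp
  finally show ?thesis .
qed

fun cheb_P :: "nat \<Rightarrow> real poly" where
  "cheb_P 0 = 1"
| "cheb_P (Suc 0) = [:0, 1:]"
| "cheb_P (Suc (Suc m)) = [:0, 2:] * cheb_P (Suc m) - cheb_P m"

lemma poly_cheb_P: "poly (cheb_P j) x = cheb_T j x"
  by (induction j rule: cheb_P.induct) auto

lemma degree_cheb_P: "degree (cheb_P j) \<le> j"
proof (induction j rule: cheb_P.induct)
  case (3 m)
  have "degree ([:0, 2:] * cheb_P (Suc m)) \<le> Suc (Suc m)"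
    using 3(1) degree_mult_le[of "[:0, 2:]" "cheb_P (Suc m)"] by simp
  moreover have "degree (cheb_P m) \<le> Suc (Suc m)" using 3(2) by simp
  ultimately show ?case by (simp add: degree_diff_le)
qed auto

definition PP :: "nat \<Rightarrow> (nat \<Rightarrow> real) \<Rightarrow> real poly" where
  "PP n a = (\<Sum>j\<le>n. smult (a j) (cheb_P j))"

lemma poly_PP: "poly (PP n a) x = (\<Sum>j\<le>n. a j * cheb_T j x)"
  by (simp add: PP_def poly_sum poly_cheb_P)

lemma degree_PP: "degree (PP n a) \<le> n"
  unfolding PP_def
proof (rule degree_sum_le)
  fix j assume "j \<in> {..n}"
  then show "degree (smult (a j) (cheb_P j)) \<le> n"
    using degree_cheb_P[of j] degree_smult_le[of "a j" "cheb_P j"] by auto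
qed simp

context
  fixes f :: "real \<Rightarrow> real"
  assumes contf: "continuous_on {-1..1} f"
begin

lemma sd_bdd: "bdd_above ((\<lambda>x. \<bar>f x - poly p x\<bar>) ` {-1..1})"
proof -
  have "continuous_on {-1..1} (\<lambda>x. \<bar>f x - poly p x\<bar>)"
    by (intro continuous_intros contf)
  hence "compact ((\<lambda>x. \<bar>f x - poly p x\<bar>) ` {-1..1})"
    by (intro compact_continuous_image) auto
  thus ?thesis by (intro bounded_imp_bdd_above compact_imp_bounded)
qed

lemma sd_upper: "y \<in> {-1..1} \<Longrightarrow> \<bar>f y - poly p y\<bar> \<le> sup_dist f p"
  unfolding sup_dist_def by (rule cSup_upper) (use sd_bdd in auto)

lemma sd_least: "(\<And>y. y \<in> {-1..1} \<Longrightarrow> \<bar>f y - poly p y\<bar> \<le> B) \<Longrightarrow> sup_dist f p \<le> B"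
  unfolding sup_dist_def by (rule cSup_least) auto

lemma sd_nonneg: "sup_dist f p \<ge> 0"
  using sd_upper[of 0 p] by simp

lemma sd_lip:
  assumes "\<And>y. y \<in> {-1..1} \<Longrightarrow> \<bar>poly p y - poly q y\<bar> \<le> B"
  shows "sup_dist f p \<le> sup_dist f q + B"
proof (rule sd_least)
  fix y :: real assume y: "y \<in> {-1..1}"
  have "\<bar>f y - poly p y\<bar> \<le> \<bar>f y - poly q y\<bar> + \<bar>poly p y - poly q y\<bar>" by linarith
  also have "\<dots> \<le> sup_dist f q + B" using sd_upper[OF y, of q] assms[OF y] by linarith
  finally show "\<bar>f y - poly p y\<bar> \<le> sup_dist f q + B" .
qed

lemma PP_diff_bound:
  assumes "y \<in> {-1..1}"
  shows "\<bar>poly (PP n b) y - poly (PP n a) y\<bar> \<le> (\<Sum>j\<le>n. \<bar>b j - a j\<bar>)"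
proof -
  have "\<bar>poly (PP n b) y - poly (PP n a) y\<bar> = \<bar>\<Sum>j\<le>n. (b j - a j) * cheb_T j y\<bar>"
    by (simp add: poly_PP sum_subtractf left_diff_distrib)
  also have "\<dots> \<le> (\<Sum>j\<le>n. \<bar>(b j - a j) * cheb_T j y\<bar>)" by (rule sum_abs)
  also have "\<dots> \<le> (\<Sum>j\<le>n. \<bar>b j - a j\<bar>)"
  proof (intro sum_mono)
    fix j
    have "\<bar>cheb_T j y\<bar> \<le> 1" using assms by (intro cheb_T_bound) auto
    then show "\<bar>(b j - a j) * cheb_T j y\<bar> \<le> \<bar>b j - a j\<bar>"
      by (simp add: abs_mult mult_left_le)
  qed
  finally show ?thesis .
qed

lemma F_cont: "continuous_on K (\<lambda>a. sup_dist f (PP n a))"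
  unfolding continuous_on_def
proof (intro ballI)
  fix a assume "a \<in> K"
  define G where "G b = (\<Sum>j\<le>n. \<bar>b j - a j\<bar>)" for b :: "nat \<Rightarrow> real"
  have Gc: "continuous_on UNIV G"
    unfolding G_def by (intro continuous_intros continuous_on_product_coordinates)
  hence "(G \<longlongrightarrow> G a) (at a within K)"
    by (meson UNIV_I continuous_on_def tendsto_within_subset top_greatest)
  hence G0: "(G \<longlongrightarrow> 0) (at a within K)" by (simp add: G_def)
  have "((\<lambda>b. sup_dist f (PP n b) - sup_dist f (PP n a)) \<longlongrightarrow> 0) (at a within K)"
  proof (rule Lim_null_comparison[OF _ G0], intro always_eventually allI)
    fix b
    have "sup_dist f (PP n b) \<le> sup_dist f (PP n a) + G b"
      unfolding G_def by (intro sd_lip PP_diff_bound)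
    moreover have "sup_dist f (PP n a) \<le> sup_dist f (PP n b) + G b"
    proof -
      have "(\<Sum>j\<le>n. \<bar>a j - b j\<bar>) = G b" unfolding G_def by (simp add: abs_minus_commute)
      moreover have "sup_dist f (PP n a) \<le> sup_dist f (PP n b) + (\<Sum>j\<le>n. \<bar>a j - b j\<bar>)"
        by (intro sd_lip PP_diff_bound)
      ultimately show ?thesis by simp
    qed
    ultimately show "norm (sup_dist f (PP n b) - sup_dist f (PP n a)) \<le> G b" by simp
  qed
  then show "((\<lambda>a. sup_dist f (PP n a)) \<longlongrightarrow> sup_dist f (PP n a)) (at a within K)"
    by (simp add: LIM_zero_iff)
qed

lemma best_exists: "\<exists>p. degree p \<le> n \<and> (\<forall>q. degree q \<le> n \<longrightarrow> sup_dist f p \<le> sup_dist f q)"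
proof -
  define D0 where "D0 = sup_dist f 0"
  have D0: "D0 \<ge> 0" unfolding D0_def by (rule sd_nonneg)
  define S where "S j = (if j \<le> n then {-4*D0..4*D0} else {0::real})" for j
  define K where "K = PiE UNIV S"
  have "compactin (product_topology (\<lambda>_. euclidean) UNIV) K"
    unfolding K_def compactin_PiE by (auto simp: S_def)
  hence cK: "compact K" by (simp add: euclidean_product_topology)
  have z: "(\<lambda>_. 0) \<in> K" using D0 by (auto simp: K_def S_def)
  obtain as where as: "as \<in> K" "\<forall>b\<in>K. sup_dist f (PP n as) \<le> sup_dist f (PP n b)"
    using continuous_attains_inf[OF cK _ F_cont, of n] z by blast
  have PP0: "PP n (\<lambda>_. 0) = 0" by (simp add: PP_def)
  have le0: "sup_dist f (PP n as) \<le> D0" using as(2) z PP0 by (force simp: D0_def)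
  show ?thesis
  proof (intro exI conjI allI impI)
    show "degree (PP n as) \<le> n" by (rule degree_PP)
  next
    fix q :: "real poly" assume q: "degree q \<le> n"
    show "sup_dist f (PP n as) \<le> sup_dist f q"
    proof (cases "sup_dist f q \<le> D0")
      case False then show ?thesis using le0 by simp
    next
      case True
      obtain a where a: "\<forall>x. poly q x = (\<Sum>j\<le>n. a j * cheb_T j x)"
        using inV_poly[OF q] unfolding inV_def by blast
      define a' where "a' j = (if j \<le> n then a j else 0)" for j
      have a': "\<forall>x. poly q x = (\<Sum>j\<le>n. a' j * cheb_T j x)" using a by (simp add: a'_def)
      have bnd: "\<forall>y\<in>{-1..1}. \<bar>poly q y\<bar> \<le> 2 * D0"
      proof
        fix y :: real assume y: "y \<in> {-1..1}"
        have "\<bar>f y\<bar> \<le> D0" using sd_upper[OF y, of 0] by (simp add: D0_def)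
        moreover have "\<bar>f y - poly q y\<bar> \<le> D0" using sd_upper[OF y, of q] True by simp
        ultimately show "\<bar>poly q y\<bar> \<le> 2 * D0" by linarith
      qed
      have "a' \<in> K"
      proof -
        have "a' j \<in> S j" for j
        proof (cases "j \<le> n")
          case True
          have "\<bar>a' j\<bar> \<le> 2 * (2 * D0)" by (rule coef_bound[OF a' True bnd])
          then show ?thesis using True by (auto simp: S_def)
        qed (simp add: S_def a'_def)
        then show ?thesis by (simp add: K_def PiE_iff)
      qed
      moreover have "PP n a' = q"
        using a' by (intro poly_eq_poly_eq_iff[THEN iffD1] ext) (simp add: poly_PP)
      ultimately show ?thesis using as(2) by force
    qed
  qed
qed

lemma best_approx_prop:
  "degree (best_approx f n) \<le> n \<and> (\<forall>q. degree q \<le> n \<longrightarrow> sup_dist f (best_approx f n) \<le> sup_dist f q)"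
  unfolding best_approx_def by (rule someI_ex) (rule best_exists)

end

lemma wt_sq_bound2:
  assumes "n < L" "\<bar>x\<bar> \<le> 1"
  shows "(\<Sum>i\<le>L. (wt L n x i)^2) \<le> 2 * (real n + 1) / real L"
proof -
  have "(\<Sum>i\<le>L. (wt L n x i)^2) \<le> (\<Sum>i\<le>L. (wt L n x i)^2 / rho L i)"
  proof (intro sum_mono)
    fix i
    have "(wt L n x i)^2 * rho L i \<le> (wt L n x i)^2 * 1" using rho_le1[of L i] by (intro mult_left_mono) auto
    then show "(wt L n x i)^2 \<le> (wt L n x i)^2 / rho L i" using rho_pos[of L i] by (simp add: le_divide_eq)
  qed
  also have "\<dots> \<le> 2 * (real n + 1) / real L" by (rule wt_sq_bound[OF assms])
  finally show ?thesis .
qed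

lemma wt_abs_bound:
  assumes "n < L" "\<bar>x\<bar> \<le> 1"
  shows "(\<Sum>i\<le>L. \<bar>wt L n x i\<bar>) \<le> sqrt (2 * (real n + 1))"
proof -
  have L: "L > 0" using assms by simp
  have "(\<Sum>i\<le>L. \<bar>wt L n x i\<bar>) = (\<Sum>i\<le>L. (\<bar>wt L n x i\<bar> / sqrt (rho L i)) * sqrt (rho L i))"
    using rho_pos by (intro sum.cong refl) simp
  hence "(\<Sum>i\<le>L. \<bar>wt L n x i\<bar>)^2 \<le> (\<Sum>i\<le>L. (\<bar>wt L n x i\<bar> / sqrt (rho L i))^2) * (\<Sum>i\<le>L. (sqrt (rho L i))^2)"
    using Cauchy_Schwarz_ineq_sum by metis
  also have "\<dots> = (\<Sum>i\<le>L. (wt L n x i)^2 / rho L i) * real L"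
  proof -
    have "(\<Sum>i\<le>L. (\<bar>wt L n x i\<bar> / sqrt (rho L i))^2) = (\<Sum>i\<le>L. (wt L n x i)^2 / rho L i)"
      using rho_pos by (intro sum.cong refl) (simp add: power_divide less_imp_le)
    moreover have "(\<Sum>i\<le>L. (sqrt (rho L i))^2) = real L"
      using rho_pos sum_rho[OF L] by (simp add: less_imp_le)
    ultimately show ?thesis by simp
  qed
  also have "\<dots> \<le> (2 * (real n + 1) / real L) * real L"
    by (intro mult_right_mono wt_sq_bound[OF assms]) auto
  also have "\<dots> = 2 * (real n + 1)" using L by simp
  finally have "(\<Sum>i\<le>L. \<bar>wt L n x i\<bar>)^2 \<le> 2 * (real n + 1)" .
  then have "sqrt ((\<Sum>i\<le>L. \<bar>wt L n x i\<bar>)^2) \<le> sqrt (2 * (real n + 1))" by (rule real_sqrt_le_mono)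
  then show ?thesis by (simp add: sum_nonneg)
qed

lemma det_bound:
  assumes contf: "continuous_on {-1..1} f" and nL: "n < L" and x: "x \<in> {-1..1}"
  shows "\<bar>(\<Sum>i\<le>L. f (cheb_pt L i) * wt L n x i) - f x\<bar> \<le> (sqrt (8 * (real n + 1)) + 1) * sup_dist f (best_approx f n)"
proof -
  define p where "p = best_approx f n"
  define R where "R = sup_dist f p"
  have dp: "degree p \<le> n" using best_approx_prop[OF contf] by (simp add: p_def)
  have R0: "R \<ge> 0" unfolding R_def by (rule sd_nonneg[OF contf])
  have pt: "cheb_pt L i \<in> {-1..1}" for i by (simp add: cheb_pt_def)
  have xa: "\<bar>x\<bar> \<le> 1" using x by auto
  have rep: "(\<Sum>i\<le>L. poly p (cheb_pt L i) * wt L n x i) = poly p x"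
    by (rule reproduce[OF inV_poly[OF dp] nL])
  have "(\<Sum>i\<le>L. f (cheb_pt L i) * wt L n x i) - f x =
        (\<Sum>i\<le>L. (f (cheb_pt L i) - poly p (cheb_pt L i)) * wt L n x i) - (f x - poly p x)"
    using rep by (simp add: left_diff_distrib sum_subtractf)
  hence "\<bar>(\<Sum>i\<le>L. f (cheb_pt L i) * wt L n x i) - f x\<bar> \<le>
        \<bar>\<Sum>i\<le>L. (f (cheb_pt L i) - poly p (cheb_pt L i)) * wt L n x i\<bar> + \<bar>f x - poly p x\<bar>"
    by linarith
  also have "\<dots> \<le> R * sqrt (8 * (real n + 1)) + R"
  proof (intro add_mono)
    show "\<bar>f x - poly p x\<bar> \<le> R" unfolding R_def by (rule sd_upper[OF contf x])
    have "\<bar>\<Sum>i\<le>L. (f (cheb_pt L i) - poly p (cheb_pt L i)) * wt L n x i\<bar>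
          \<le> (\<Sum>i\<le>L. \<bar>(f (cheb_pt L i) - poly p (cheb_pt L i)) * wt L n x i\<bar>)" by (rule sum_abs)
    also have "\<dots> \<le> (\<Sum>i\<le>L. R * \<bar>wt L n x i\<bar>)"
    proof (intro sum_mono)
      fix i
      have "\<bar>f (cheb_pt L i) - poly p (cheb_pt L i)\<bar> \<le> R" unfolding R_def by (rule sd_upper[OF contf pt])
      then show "\<bar>(f (cheb_pt L i) - poly p (cheb_pt L i)) * wt L n x i\<bar> \<le> R * \<bar>wt L n x i\<bar>"
        by (simp add: abs_mult mult_right_mono)
    qed
    also have "\<dots> = R * (\<Sum>i\<le>L. \<bar>wt L n x i\<bar>)" by (simp add: sum_distrib_left)
    also have "\<dots> \<le> R * sqrt (2 * (real n + 1))" by (intro mult_left_mono wt_abs_bound[OF nL xa] R0)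
    also have "\<dots> \<le> R * sqrt (8 * (real n + 1))" by (intro mult_left_mono R0) simp
    finally show "\<bar>\<Sum>i\<le>L. (f (cheb_pt L i) - poly p (cheb_pt L i)) * wt L n x i\<bar> \<le> R * sqrt (8 * (real n + 1))" .
  qed
  also have "\<dots> = (sqrt (8 * (real n + 1)) + 1) * sup_dist f (best_approx f n)"
    by (simp add: R_def p_def algebra_simps)
  finally show ?thesis .
qed

lemma exp_taylor_lower:
  fixes x :: real assumes "x \<ge> 0"
  shows "(\<Sum>k<n. x^k / fact k) \<le> exp x"
proof -
  have s: "(\<lambda>k. x^k /\<^sub>R fact k) sums exp x" by (rule exp_converges)
  have "(\<Sum>k\<in>{..<n}. x^k /\<^sub>R fact k) \<le> suminf (\<lambda>k. x^k /\<^sub>R fact k)"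
    using assms by (intro sum_le_suminf sums_summable[OF s]) auto
  then show ?thesis using sums_unique[OF s] by (simp add: divide_inverse mult.commute)
qed

lemma exp_le_quad_neg: fixes y :: real assumes "y \<le> 0" shows "exp y \<le> 1 + y + y^2/2"
proof -
  have "(\<lambda>t. 1 + t + t^2/2 - exp t) y \<ge> (\<lambda>t. 1 + t + t^2/2 - exp t) 0"
  proof (rule DERIV_nonpos_imp_nonincreasing[OF assms])
    fix t :: real assume "y \<le> t" "t \<le> 0"
    show "\<exists>d. DERIV (\<lambda>t. 1 + t + t^2/2 - exp t) t :> d \<and> d \<le> 0"
      by (rule exI[of _ "1 + t - exp t"]) (auto intro!: derivative_eq_intros)
  qed
  then show ?thesis by simp
qed

lemma h2_nonneg: fixes y :: real assumes "y \<ge> 0" shows "exp y \<le> (2 + y^2) * exp (y^2/4)"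
proof (cases "y \<ge> 1")
  case True
  have "y \<le> y^2/4 + 1" using zero_le_power2[of "y/2 - 1"] by (simp add: power2_eq_square field_simps)
  hence "exp y \<le> exp (y^2/4 + 1)" by simp
  also have "\<dots> = exp 1 * exp (y^2/4)" by (simp add: exp_add)
  also have "\<dots> \<le> 3 * exp (y^2/4)" using exp_le by (intro mult_right_mono) auto
  also have "\<dots> \<le> (2 + y^2) * exp (y^2/4)"
  proof -
    have "1 \<le> y^2" using True by (simp add: one_le_power)
    then show ?thesis by (intro mult_right_mono) auto
  qed
  finally show ?thesis .
next
  case False
  have "exp y \<le> 1 + y + y^2" using exp_bound[of y] assms False by simp
  also have "\<dots> \<le> (2 + y^2) * (1 + y^2/4)"
  proof -
    have "y \<le> 1 + y^2/2" using zero_le_power2[of "y - 1"] by (simp add: power2_eq_square field_simps)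
    moreover have "0 \<le> y^2 * y^2" by simp
    moreover have "(2 + y^2) * (1 + y^2/4) = 2 + 3/2 * y^2 + y^2 * y^2 / 4" by (simp add: field_simps)
    ultimately show ?thesis by linarith
  qed
  also have "\<dots> \<le> (2 + y^2) * exp (y^2/4)"
    by (intro mult_left_mono) (auto simp: add.commute)
  finally show ?thesis .
qed

lemma exp_pointwise: fixes y :: real shows "exp y \<le> 1 + y + 4 * (exp (y^2/4) - 1)"
proof (cases "y \<ge> 0")
  case False
  have "exp y \<le> 1 + y + y^2/2" using False by (intro exp_le_quad_neg) simp
  also have "y^2/2 \<le> 4 * (exp (y^2/4) - 1)"
  proof -
    have "1 + y^2/4 \<le> exp (y^2/4)" by (rule exp_ge_add_one_self)
    moreover have "0 \<le> y^2" by simp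
    moreover have "4 * (exp (y^2/4) - 1) = 4 * exp (y^2/4) - 4" by simp
    ultimately show ?thesis by linarith
  qed
  finally show ?thesis by simp
next
  case True
  define h' where "h' t = 2 * t * exp (t^2/4) + 1 - exp t" for t :: real
  define h where "h t = 4 * exp (t^2/4) - 3 + t - exp t" for t :: real
  have dh': "DERIV h' t :> (2 + t^2) * exp (t^2/4) - exp t" for t
    unfolding h'_def by (auto intro!: derivative_eq_intros simp: algebra_simps power2_eq_square)
  have dh: "DERIV h t :> h' t" for t
    unfolding h_def h'_def by (auto intro!: derivative_eq_intros simp: algebra_simps power2_eq_square)
  have h'pos: "h' t \<ge> 0" if "t \<ge> 0" for t
  proof -
    have "h' 0 \<le> h' t"
    proof (rule DERIV_nonneg_imp_nondecreasing[OF that])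
      fix x :: real assume "0 \<le> x" "x \<le> t"
      then show "\<exists>d. DERIV h' x :> d \<and> d \<ge> 0" using dh'[of x] h2_nonneg[of x] by auto
    qed
    then show ?thesis by (simp add: h'_def)
  qed
  have "h 0 \<le> h y"
  proof (rule DERIV_nonneg_imp_nondecreasing[OF True])
    fix x :: real assume "0 \<le> x" "x \<le> y"
    then show "\<exists>d. DERIV h x :> d \<and> d \<ge> 0" using dh[of x] h'pos[of x] by auto
  qed
  then show ?thesis by (simp add: h_def)
qed

lemma poly_vs_exp:
  fixes u :: real assumes "0 \<le> u" "u \<le> 9/4"
  shows "1 + u + 2 * u^2 / (4 - u) \<le> exp u"
proof -
  have e: "(\<Sum>k<6. u^k / fact k) \<le> exp u" by (rule exp_taylor_lower[OF assms(1)])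
  have s: "(\<Sum>k<6. u^k / fact k) = 1 + u + u^2/2 + u^3/6 + u^4/24 + u^5/120"
    by (simp add: numeral_eq_Suc fact_numeral)
  have "u^2 \<le> (9/4)^2" by (rule power_mono) (use assms in auto)
  hence u2: "u^2 \<le> 81/16" by (simp add: power2_eq_square)
  have "u^3 \<le> (9/4)^3" by (rule power_mono) (use assms in auto)
  hence u3: "u^3 \<le> 729/64" by (simp add: power3_eq_cube)
  have key: "u^3 * (u^2 + u^3) \<le> u^3 * 20" using u2 u3 assms by (intro mult_left_mono) auto
  have "2 * u^2 / (4 - u) \<le> u^2/2 + u^3/6 + u^4/24 + u^5/120"
  proof -
    have "2 * u^2 \<le> (u^2/2 + u^3/6 + u^4/24 + u^5/120) * (4 - u)"
    proof -
      have "(u^2/2 + u^3/6 + u^4/24 + u^5/120) * (4 - u) = 2 * u^2 + (20 * u^3 - u^3 * (u^2 + u^3)) / 120"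
        by algebra
      then show ?thesis using key by simp
    qed
    then show ?thesis using assms by (simp add: divide_le_eq)
  qed
  then show ?thesis using e s by linarith
qed

lemma three_le_exp: "3 \<le> exp (9/8 :: real)"
proof -
  have "(1 + 3/8 + (3/8)^2/2 :: real) \<le> exp (3/8)" by (rule exp_lower_Taylor_quadratic) simp
  hence "(1 + 3/8 + (3/8)^2/2 :: real)^3 \<le> exp (3/8) ^ 3" by (intro power_mono) auto
  also have "exp (3/8 :: real) ^ 3 = exp (9/8)" by (simp add: exp_of_nat_mult[symmetric])
  moreover have "(3::real) \<le> (1 + 3/8 + (3/8)^2/2)^3" by (simp add: power3_eq_cube power2_eq_square)
  ultimately show ?thesis by linarith
qed

context prob_space
begin

lemma layer_cake:
  fixes X :: "'a \<Rightarrow> real" and \<phi> \<phi>' :: "real \<Rightarrow> real"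
  assumes X[measurable]: "X \<in> borel_measurable M"
    and d[measurable]: "\<phi>' \<in> borel_measurable borel"
    and D: "\<And>u. u \<ge> 0 \<Longrightarrow> DERIV \<phi> u :> \<phi>' u"
    and nn: "\<And>u. u \<ge> 0 \<Longrightarrow> \<phi>' u \<ge> 0"
    and z: "\<phi> 0 = 0"
  shows "(\<integral>\<^sup>+\<omega>. ennreal (\<phi> \<bar>X \<omega>\<bar>) \<partial>M) =
         (\<integral>\<^sup>+u. ennreal (\<phi>' u) * indicator {0..} u * emeasure M {\<omega>\<in>space M. u \<le> \<bar>X \<omega>\<bar>} \<partial>lborel)"
proof -
  interpret P: pair_sigma_finite M lborel
    by (simp add: pair_sigma_finite.intro lborel.sigma_finite_measure_axioms sigma_finite_measure_axioms)
  define g where "g \<omega> u = ennreal (\<phi>' u * (if 0 \<le> u \<and> u \<le> \<bar>X \<omega>\<bar> then 1 else 0))" for \<omega> u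
  have gm: "case_prod g \<in> borel_measurable (M \<Otimes>\<^sub>M lborel)"
    unfolding g_def by measurable
  have "(\<integral>\<^sup>+\<omega>. ennreal (\<phi> \<bar>X \<omega>\<bar>) \<partial>M) = (\<integral>\<^sup>+\<omega>. (\<integral>\<^sup>+u. g \<omega> u \<partial>lborel) \<partial>M)"
  proof (intro nn_integral_cong)
    fix \<omega>
    have "(\<integral>\<^sup>+u. ennreal (\<phi>' u) * indicator {0 .. \<bar>X \<omega>\<bar>} u \<partial>lborel) = \<phi> \<bar>X \<omega>\<bar> - \<phi> 0"
      by (rule nn_integral_FTC_Icc) (use D nn in auto)
    moreover have "(\<integral>\<^sup>+u. g \<omega> u \<partial>lborel) = (\<integral>\<^sup>+u. ennreal (\<phi>' u) * indicator {0 .. \<bar>X \<omega>\<bar>} u \<partial>lborel)"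
      by (intro nn_integral_cong) (auto simp: g_def indicator_def)
    ultimately show "ennreal (\<phi> \<bar>X \<omega>\<bar>) = (\<integral>\<^sup>+u. g \<omega> u \<partial>lborel)" using z by simp
  qed
  also have "\<dots> = (\<integral>\<^sup>+u. (\<integral>\<^sup>+\<omega>. g \<omega> u \<partial>M) \<partial>lborel)"
    using P.Fubini'[OF gm] by simp
  also have "\<dots> = (\<integral>\<^sup>+u. ennreal (\<phi>' u) * indicator {0..} u * emeasure M {\<omega>\<in>space M. u \<le> \<bar>X \<omega>\<bar>} \<partial>lborel)"
  proof (intro nn_integral_cong)
    fix u :: real
    show "(\<integral>\<^sup>+\<omega>. g \<omega> u \<partial>M) = ennreal (\<phi>' u) * indicator {0..} u * emeasure M {\<omega>\<in>space M. u \<le> \<bar>X \<omega>\<bar>}"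
    proof (cases "u \<ge> 0")
      case True
      have "(\<integral>\<^sup>+\<omega>. g \<omega> u \<partial>M) = (\<integral>\<^sup>+\<omega>. ennreal (\<phi>' u) * indicator {\<omega>\<in>space M. u \<le> \<bar>X \<omega>\<bar>} \<omega> \<partial>M)"
        using True by (intro nn_integral_cong) (auto simp: g_def indicator_def)
      also have "\<dots> = ennreal (\<phi>' u) * emeasure M {\<omega>\<in>space M. u \<le> \<bar>X \<omega>\<bar>}"
        by (rule nn_integral_cmult_indicator) measurable
      finally show ?thesis using True by simp
    next
      case False
      then show ?thesis by (simp add: g_def)
    qed
  qed
  finally show ?thesis .
qed

end

lemma exp_neg_sq_lim:
  fixes c :: real assumes "c > 0"
  shows "((\<lambda>u. exp (- (c * u^2))) \<longlongrightarrow> 0) at_top"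
proof -
  have "LIM u at_top. (u::real)^2 :> at_top" by (rule filterlim_pow_at_top[where f="\<lambda>x. x" and n=2]) (auto intro: filterlim_ident)
  hence "LIM u at_top. c * u^2 :> at_top"
    using assms by (intro filterlim_tendsto_pos_mult_at_top[OF tendsto_const]) auto
  hence "LIM u at_top. - (c * u^2) :> at_bot" by (simp add: filterlim_uminus_at_top)
  then show ?thesis by (rule filterlim_compose[OF exp_at_bot])
qed

context prob_space
begin

lemma tail_integral:
  fixes X :: "'a \<Rightarrow> real" and \<phi> \<phi>' G :: "real \<Rightarrow> real"
  assumes X[measurable]: "X \<in> borel_measurable M"
    and tail: "\<And>t. t \<ge> 0 \<Longrightarrow> prob {\<omega>\<in>space M. \<bar>X \<omega>\<bar> \<ge> t} \<le> 2 * exp (- (t^2))"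
    and d[measurable]: "\<phi>' \<in> borel_measurable borel"
    and D: "\<And>u. u \<ge> 0 \<Longrightarrow> DERIV \<phi> u :> \<phi>' u"
    and nn: "\<And>u. u \<ge> 0 \<Longrightarrow> \<phi>' u \<ge> 0"
    and z: "\<phi> 0 = 0"
    and DG: "\<And>u. u \<ge> 0 \<Longrightarrow> DERIV G u :> \<phi>' u * (2 * exp (- (u^2)))"
    and lim: "(G \<longlongrightarrow> T) at_top"
  shows "(\<integral>\<^sup>+\<omega>. ennreal (\<phi> \<bar>X \<omega>\<bar>) \<partial>M) \<le> ennreal (T - G 0)"
proof -
  have "(\<integral>\<^sup>+\<omega>. ennreal (\<phi> \<bar>X \<omega>\<bar>) \<partial>M) =
         (\<integral>\<^sup>+u. ennreal (\<phi>' u) * indicator {0..} u * emeasure M {\<omega>\<in>space M. u \<le> \<bar>X \<omega>\<bar>} \<partial>lborel)"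
    by (rule layer_cake[OF X d D nn z])
  also have "\<dots> \<le> (\<integral>\<^sup>+u. ennreal (\<phi>' u * (2 * exp (- (u^2)))) * indicator {0..} u \<partial>lborel)"
  proof (intro nn_integral_mono)
    fix u :: real
    show "ennreal (\<phi>' u) * indicator {0..} u * emeasure M {\<omega>\<in>space M. u \<le> \<bar>X \<omega>\<bar>}
          \<le> ennreal (\<phi>' u * (2 * exp (- (u^2)))) * indicator {0..} u"
    proof (cases "u \<ge> 0")
      case True
      have "emeasure M {\<omega>\<in>space M. u \<le> \<bar>X \<omega>\<bar>} = ennreal (prob {\<omega>\<in>space M. u \<le> \<bar>X \<omega>\<bar>})"
        by (simp add: emeasure_eq_measure)
      also have "\<dots> \<le> ennreal (2 * exp (- (u^2)))"
        using tail[OF True] by (intro ennreal_leI) simp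
      finally have "ennreal (\<phi>' u) * emeasure M {\<omega>\<in>space M. u \<le> \<bar>X \<omega>\<bar>} \<le> ennreal (\<phi>' u) * ennreal (2 * exp (- (u^2)))"
        by (intro mult_left_mono) auto
      then show ?thesis using True nn[OF True] by (simp add: ennreal_mult mult_ac)
    qed simp
  qed
  also have "\<dots> = ennreal (T - G 0)"
    by (rule nn_integral_FTC_atLeast[OF _ DG _ lim]) (use nn in auto)
  finally show ?thesis .
qed

lemma expsq_half_bound:
  fixes X :: "'a \<Rightarrow> real"
  assumes X[measurable]: "X \<in> borel_measurable M"
    and tail: "\<And>t. t \<ge> 0 \<Longrightarrow> prob {\<omega>\<in>space M. \<bar>X \<omega>\<bar> \<ge> t} \<le> 2 * exp (- (t^2))"
  shows "(\<integral>\<^sup>+\<omega>. ennreal (exp ((X \<omega>)^2 / 2)) \<partial>M) \<le> 3"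
proof -
  define G where "G u = - 2 * exp (- (1/2 * u^2))" for u :: real
  have "(\<integral>\<^sup>+\<omega>. ennreal ((\<lambda>v. exp (v^2/2) - 1) \<bar>X \<omega>\<bar>) \<partial>M) \<le> ennreal (0 - G 0)"
  proof (rule tail_integral[OF X tail, where \<phi>' = "\<lambda>u. u * exp (u^2/2)" and G = G])
    show "\<And>u. 0 \<le> u \<Longrightarrow> ((\<lambda>v. exp (v^2/2) - 1) has_real_derivative u * exp (u^2/2)) (at u)"
      by (auto intro!: derivative_eq_intros simp: power2_eq_square)
    show "\<And>u. 0 \<le> u \<Longrightarrow> (G has_real_derivative u * exp (u^2/2) * (2 * exp (- (u^2)))) (at u)"
    proof -
      fix u :: real assume "0 \<le> u"
      have d: "(G has_real_derivative (- 2) * (exp (- (1/2 * u^2)) * (- (1/2 * (2 * u))))) (at u)"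
        unfolding G_def by (auto intro!: derivative_eq_intros simp: power2_eq_square)
      have e: "exp (u^2/2) * exp (- (u^2)) = exp (- (1/2 * u^2))" by (simp flip: exp_add)
      have "(- 2) * (exp (- (1/2 * u^2)) * (- (1/2 * (2 * u)))) = u * exp (u^2/2) * (2 * exp (- (u^2)))"
        using e by (simp add: algebra_simps)
      then show "(G has_real_derivative u * exp (u^2/2) * (2 * exp (- (u^2)))) (at u)"
        using DERIV_cong[OF d] by blast
    qed
    show "(G \<longlongrightarrow> 0) at_top"
      unfolding G_def using tendsto_mult[OF tendsto_const[of "-2"] exp_neg_sq_lim[of "1/2"]] by simp
  qed auto
  hence A: "(\<integral>\<^sup>+\<omega>. ennreal (exp ((X \<omega>)^2 / 2) - 1) \<partial>M) \<le> 2" by (simp add: G_def)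
  have "(\<integral>\<^sup>+\<omega>. ennreal (exp ((X \<omega>)^2 / 2)) \<partial>M) = (\<integral>\<^sup>+\<omega>. ennreal (exp ((X \<omega>)^2 / 2) - 1) + 1 \<partial>M)"
  proof (intro nn_integral_cong)
    fix \<omega>
    have "1 \<le> exp ((X \<omega>)^2 / 2)" by simp
    then have "ennreal (exp ((X \<omega>)^2 / 2) - 1) + 1 = ennreal ((exp ((X \<omega>)^2 / 2) - 1) + 1)"
      by (subst ennreal_plus) auto
    then show "ennreal (exp ((X \<omega>)^2 / 2)) = ennreal (exp ((X \<omega>)^2 / 2) - 1) + 1"
      by simp
  qed
  also have "\<dots> = (\<integral>\<^sup>+\<omega>. ennreal (exp ((X \<omega>)^2 / 2) - 1) \<partial>M) + 1"
    by (subst nn_integral_add) (auto simp: emeasure_space_1)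
  also have "\<dots> \<le> 2 + 1" using A by (intro add_right_mono)
  finally show ?thesis by simp
qed

lemma expsq_theta_bound:
  fixes X :: "'a \<Rightarrow> real"
  assumes X[measurable]: "X \<in> borel_measurable M"
    and tail: "\<And>t. t \<ge> 0 \<Longrightarrow> prob {\<omega>\<in>space M. \<bar>X \<omega>\<bar> \<ge> t} \<le> 2 * exp (- (t^2))"
    and th: "0 < \<theta>" "\<theta> < 1"
  shows "(\<integral>\<^sup>+\<omega>. ennreal (exp (\<theta> * (X \<omega>)^2) - 1 - \<theta> * (X \<omega>)^2) \<partial>M) \<le> ennreal (2 * \<theta>^2 / (1 - \<theta>))"
proof -
  define a where "a = 2 * \<theta> / (1 - \<theta>)"
  define G where "G u = a * (- exp (- ((1 - \<theta>) * u^2))) + 2 * \<theta> * exp (- (u^2))" for u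
  have G0: "0 - G 0 = 2 * \<theta>^2 / (1 - \<theta>)"
    using th by (simp add: G_def a_def field_simps power2_eq_square)
  have "(\<integral>\<^sup>+\<omega>. ennreal ((\<lambda>v. exp (\<theta> * v^2) - 1 - \<theta> * v^2) \<bar>X \<omega>\<bar>) \<partial>M) \<le> ennreal (0 - G 0)"
  proof (rule tail_integral[OF X tail, where \<phi>' = "\<lambda>u. 2 * \<theta> * u * (exp (\<theta> * u^2) - 1)" and G = G])
    show "\<And>u. 0 \<le> u \<Longrightarrow> ((\<lambda>v. exp (\<theta> * v^2) - 1 - \<theta> * v^2) has_real_derivative 2 * \<theta> * u * (exp (\<theta> * u^2) - 1)) (at u)"
      by (auto intro!: derivative_eq_intros simp: power2_eq_square algebra_simps)
    show "\<And>u. 0 \<le> u \<Longrightarrow> 0 \<le> 2 * \<theta> * u * (exp (\<theta> * u^2) - 1)"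
      using th by (auto intro!: mult_nonneg_nonneg)
    show "\<And>u. 0 \<le> u \<Longrightarrow> (G has_real_derivative 2 * \<theta> * u * (exp (\<theta> * u^2) - 1) * (2 * exp (- (u^2)))) (at u)"
    proof -
      fix u :: real assume "0 \<le> u"
      have e: "exp (\<theta> * u^2) * exp (- (u^2)) = exp (- ((1 - \<theta>) * u^2))" by (simp add: algebra_simps flip: exp_add)
      have d: "(G has_real_derivative a * (exp (- ((1 - \<theta>) * u^2)) * ((1 - \<theta>) * (2 * u))) + 2 * \<theta> * (exp (- (u^2)) * (- (2 * u)))) (at u)"
        unfolding G_def by (auto intro!: derivative_eq_intros simp: power2_eq_square)
      have "a * (exp (- ((1 - \<theta>) * u^2)) * ((1 - \<theta>) * (2 * u))) + 2 * \<theta> * (exp (- (u^2)) * (- (2 * u)))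
          = 4 * \<theta> * u * exp (- ((1 - \<theta>) * u^2)) - 4 * \<theta> * u * exp (- (u^2))"
        using th by (simp add: a_def field_simps)
      also have "\<dots> = 2 * \<theta> * u * (exp (\<theta> * u^2) - 1) * (2 * exp (- (u^2)))"
      proof -
        have "- ((1 - \<theta>) * u^2) = \<theta> * u^2 + (- (u^2))" by algebra
        hence e2: "exp (- ((1 - \<theta>) * u^2)) = exp (\<theta> * u^2) * exp (- (u^2))" by (simp only: exp_add)
        show ?thesis unfolding e2 by (simp add: algebra_simps)
      qed
      finally show "(G has_real_derivative 2 * \<theta> * u * (exp (\<theta> * u^2) - 1) * (2 * exp (- (u^2)))) (at u)"
        using DERIV_cong[OF d] by blast
    qed
    show "(G \<longlongrightarrow> 0) at_top"
    proof -
      have l1: "((\<lambda>u::real. exp (- (u^2))) \<longlongrightarrow> 0) at_top" using exp_neg_sq_lim[of 1] by simp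
      have "(G \<longlongrightarrow> a * (- 0) + 2 * \<theta> * 0) at_top"
        unfolding G_def using th by (intro tendsto_intros exp_neg_sq_lim l1) auto
      then show ?thesis by simp
    qed
  qed auto
  then show ?thesis using G0 by simp
qed

end

context prob_space
begin

lemma mgf_norm:
  fixes X :: "'a \<Rightarrow> real" and l :: real
  assumes X[measurable]: "X \<in> borel_measurable M"
    and tail: "\<And>t. t \<ge> 0 \<Longrightarrow> prob {\<omega>\<in>space M. \<bar>X \<omega>\<bar> \<ge> t} \<le> 2 * exp (- (t^2))"
    and intX: "integrable M X" and EX: "expectation X = 0"
    and EX2: "expectation (\<lambda>\<omega>. (X \<omega>)^2) \<le> 1"
  shows "(\<integral>\<^sup>+\<omega>. ennreal (exp (l * X \<omega>)) \<partial>M) \<le> ennreal (exp (l^2))"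
proof -
  have A: "(\<integral>\<^sup>+\<omega>. ennreal (exp ((X \<omega>)^2 / 2)) \<partial>M) \<le> 3" by (rule expsq_half_bound[OF X tail])
  have intA: "integrable M (\<lambda>\<omega>. exp ((X \<omega>)^2/2))"
  proof (rule integrableI_nonneg)
    show "(\<integral>\<^sup>+\<omega>. ennreal (exp ((X \<omega>)^2 / 2)) \<partial>M) < \<infinity>"
      using A by (simp add: le_less_trans)
  qed auto
  have pw1: "exp (l * X \<omega>) \<le> exp (l^2/2) * exp ((X \<omega>)^2/2)" for \<omega>
  proof -
    have "l * X \<omega> \<le> l^2/2 + (X \<omega>)^2/2" using zero_le_power2[of "l - X \<omega>"]
      by (simp add: power2_eq_square algebra_simps)
    then show ?thesis by (simp flip: exp_add)
  qed
  have intE: "integrable M (\<lambda>\<omega>. exp (l * X \<omega>))"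
    by (rule Bochner_Integration.integrable_bound[OF integrable_mult_right[OF intA, of "exp (l^2/2)"]]) (use pw1 in auto)
  show ?thesis
  proof (cases "l^2 \<ge> 9/4")
    case True
    have "(\<integral>\<^sup>+\<omega>. ennreal (exp (l * X \<omega>)) \<partial>M) \<le> (\<integral>\<^sup>+\<omega>. ennreal (exp (l^2/2)) * ennreal (exp ((X \<omega>)^2/2)) \<partial>M)"
      by (intro nn_integral_mono) (simp add: pw1 flip: ennreal_mult)
    also have "\<dots> = ennreal (exp (l^2/2)) * (\<integral>\<^sup>+\<omega>. ennreal (exp ((X \<omega>)^2/2)) \<partial>M)"
      by (rule nn_integral_cmult) simp
    also have "\<dots> \<le> ennreal (exp (l^2/2)) * 3" using A by (intro mult_left_mono) auto
    also have "\<dots> \<le> ennreal (exp (l^2/2)) * ennreal (exp (l^2/2))"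
    proof -
      have "3 \<le> exp (9/8::real)" by (rule three_le_exp)
      also have "\<dots> \<le> exp (l^2/2)" using True by simp
      finally show ?thesis by (intro mult_left_mono) (auto simp: ennreal_leI[of 3, simplified])
    qed
    also have "\<dots> = ennreal (exp (l^2))" by (simp flip: ennreal_mult exp_add)
    finally show ?thesis .
  next
    case False
    define \<theta> where "\<theta> = l^2/4"
    show ?thesis
    proof (cases "l = 0")
      case True
      then show ?thesis by (simp add: emeasure_space_1)
    next
      case l0: False
      have th: "0 < \<theta>" "\<theta> < 1" using False l0 by (auto simp: \<theta>_def)
      define \<phi> where "\<phi> \<omega> = exp (\<theta> * (X \<omega>)^2) - 1 - \<theta> * (X \<omega>)^2" for \<omega>
      have \<phi>nn: "\<phi> \<omega> \<ge> 0" for \<omega> using exp_ge_add_one_self[of "\<theta> * (X \<omega>)^2"] unfolding \<phi>_def by linarith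
      have B: "(\<integral>\<^sup>+\<omega>. ennreal (\<phi> \<omega>) \<partial>M) \<le> ennreal (2 * \<theta>^2 / (1 - \<theta>))"
        unfolding \<phi>_def by (rule expsq_theta_bound[OF X tail th])
      have intB: "integrable M \<phi>"
      proof (rule integrableI_nonneg)
        show "(\<integral>\<^sup>+\<omega>. ennreal (\<phi> \<omega>) \<partial>M) < \<infinity>" using B by (simp add: le_less_trans)
        show "\<phi> \<in> borel_measurable M" unfolding \<phi>_def by measurable
        show "AE \<omega> in M. 0 \<le> \<phi> \<omega>" using \<phi>nn by simp
      qed
      have EB: "expectation \<phi> \<le> 2 * \<theta>^2 / (1 - \<theta>)"
      proof -
        have "ennreal (expectation \<phi>) \<le> ennreal (2 * \<theta>^2 / (1 - \<theta>))"
          using B nn_integral_eq_integral[OF intB] \<phi>nn by simp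
        then show ?thesis using th by (subst (asm) ennreal_le_iff) auto
      qed
      have intX2: "integrable M (\<lambda>\<omega>. (X \<omega>)^2)"
      proof (rule Bochner_Integration.integrable_bound[OF integrable_mult_right[OF intA, of 2]])
        show "AE \<omega> in M. norm ((X \<omega>)^2) \<le> norm (2 * exp ((X \<omega>)^2/2))"
        proof (intro AE_I2)
          fix \<omega>
          have "1 + (X \<omega>)^2/2 \<le> exp ((X \<omega>)^2/2)" by (rule exp_ge_add_one_self)
          hence "(X \<omega>)^2 \<le> 2 * exp ((X \<omega>)^2/2)" by linarith
          then show "norm ((X \<omega>)^2) \<le> norm (2 * exp ((X \<omega>)^2/2))" by simp
        qed
      qed simp
      have pw2: "exp (l * X \<omega>) \<le> 1 + l * X \<omega> + 4 * \<theta> * (X \<omega>)^2 + 4 * \<phi> \<omega>" for \<omega>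
      proof -
        have e: "(l * X \<omega>)^2 / 4 = \<theta> * (X \<omega>)^2" by (simp add: \<theta>_def power_mult_distrib)
        have a: "exp (l * X \<omega>) \<le> 1 + l * X \<omega> + 4 * (exp ((l * X \<omega>)^2/4) - 1)" by (rule exp_pointwise)
        have b: "4 * (exp ((l * X \<omega>)^2/4) - 1) = 4 * exp (\<theta> * (X \<omega>)^2) - 4" unfolding e by simp
        have c: "4 * \<phi> \<omega> = 4 * exp (\<theta> * (X \<omega>)^2) - 4 - 4 * \<theta> * (X \<omega>)^2" by (simp add: \<phi>_def algebra_simps)
        show ?thesis using a b c by linarith
      qed
      have "expectation (\<lambda>\<omega>. exp (l * X \<omega>)) \<le> expectation (\<lambda>\<omega>. 1 + l * X \<omega> + 4 * \<theta> * (X \<omega>)^2 + 4 * \<phi> \<omega>)"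
        by (rule integral_mono[OF intE]) (use intX intX2 intB pw2 in auto)
      also have "\<dots> = 1 + l * expectation X + 4 * \<theta> * expectation (\<lambda>\<omega>. (X \<omega>)^2) + 4 * expectation \<phi>"
        using intX intX2 intB by (simp add: prob_space)
      also have "\<dots> \<le> 1 + 4 * \<theta> + 4 * (2 * \<theta>^2 / (1 - \<theta>))"
        using EX EX2 EB th by (intro add_mono) auto
      also have "\<dots> = 1 + l^2 + 2 * (l^2)^2 / (4 - l^2)"
        using th by (simp add: \<theta>_def field_simps power2_eq_square)
      also have "\<dots> \<le> exp (l^2)" using False by (intro poly_vs_exp) auto
      finally have "expectation (\<lambda>\<omega>. exp (l * X \<omega>)) \<le> exp (l^2)" .
      moreover have "(\<integral>\<^sup>+\<omega>. ennreal (exp (l * X \<omega>)) \<partial>M) = ennreal (expectation (\<lambda>\<omega>. exp (l * X \<omega>)))"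
        by (rule nn_integral_eq_integral[OF intE]) simp
      ultimately show ?thesis by (simp add: ennreal_leI)
    qed
  qed
qed

end

context prob_space
begin

lemma mgf_sub:
  fixes X :: "'a \<Rightarrow> real" and l s :: real
  assumes X[measurable]: "X \<in> borel_measurable M" and s: "s > 0"
    and tail: "subgaussian M X s"
    and intX: "integrable M X" and EX: "expectation X = 0"
    and VX: "variance X = s^2"
  shows "(\<integral>\<^sup>+\<omega>. ennreal (exp (l * X \<omega>)) \<partial>M) \<le> ennreal (exp (l^2 * s^2))"
proof -
  define Y where "Y \<omega> = X \<omega> / s" for \<omega>
  have Ym[measurable]: "Y \<in> borel_measurable M" unfolding Y_def by measurable
  have tY: "prob {\<omega>\<in>space M. \<bar>Y \<omega>\<bar> \<ge> t} \<le> 2 * exp (- (t^2))" if t: "t \<ge> 0" for t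
  proof -
    have "{\<omega>\<in>space M. \<bar>Y \<omega>\<bar> \<ge> t} = {\<omega>\<in>space M. \<bar>X \<omega>\<bar> \<ge> t * s}"
      using s by (auto simp: Y_def abs_divide field_simps)
    also have "prob \<dots> \<le> 2 * exp (- ((t * s)^2) / s^2)"
      using tail t s unfolding subgaussian_def by simp
    also have "- ((t * s)^2) / s^2 = - (t^2)" using s by (simp add: power_mult_distrib)
    finally show ?thesis .
  qed
  have intY: "integrable M Y" unfolding Y_def using intX by simp
  have EY: "expectation Y = 0" unfolding Y_def using EX by simp
  have EY2: "expectation (\<lambda>\<omega>. (Y \<omega>)^2) \<le> 1"
  proof -
    have "expectation (\<lambda>\<omega>. (X \<omega>)^2) = s^2" using VX EX by simp
    moreover have "expectation (\<lambda>\<omega>. (Y \<omega>)^2) = expectation (\<lambda>\<omega>. (X \<omega>)^2) / s^2"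
      unfolding Y_def by (simp add: power_divide)
    ultimately show ?thesis using s by simp
  qed
  have eq: "(l * s) * Y \<omega> = l * X \<omega>" for \<omega> using s by (simp add: Y_def)
  have "(\<integral>\<^sup>+\<omega>. ennreal (exp (l * X \<omega>)) \<partial>M) = (\<integral>\<^sup>+\<omega>. ennreal (exp ((l * s) * Y \<omega>)) \<partial>M)"
    by (simp only: eq)
  also have "\<dots> \<le> ennreal (exp ((l * s)^2))"
    by (rule mgf_norm[OF Ym tY intY EY EY2])
  also have "(l * s)^2 = l^2 * s^2" by (simp add: power_mult_distrib)
  finally show ?thesis .
qed

lemma chernoff_sum:
  fixes Y :: "'i \<Rightarrow> 'a \<Rightarrow> real" and c v :: "'i \<Rightarrow> real"
  assumes fin: "finite I" and ind: "indep_vars (\<lambda>_. borel) Y I"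
    and mgf: "\<And>p l. p \<in> I \<Longrightarrow> (\<integral>\<^sup>+\<omega>. ennreal (exp (l * Y p \<omega>)) \<partial>M) \<le> ennreal (exp (l^2 * v p))"
    and V: "(\<Sum>p\<in>I. (c p)^2 * v p) > 0" and tau: "rr \<ge> 0"
  shows "prob {\<omega>\<in>space M. (\<Sum>p\<in>I. c p * Y p \<omega>) \<ge> rr} \<le> exp (- (rr^2) / (4 * (\<Sum>p\<in>I. (c p)^2 * v p)))"
proof (cases "rr = 0")
  case True then show ?thesis by simp
next
  case False
  hence tau: "rr > 0" using tau by simp
  define d where "d = (\<Sum>p\<in>I. (c p)^2 * v p)"
  have d: "d > 0" using V by (simp add: d_def)
  define l where "l = rr / (2 * d)"
  have l: "l > 0" using tau d by (simp add: l_def)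
  have rv[measurable]: "p \<in> I \<Longrightarrow> Y p \<in> borel_measurable M" for p
    using ind unfolding indep_vars_def by auto
  have meas: "(\<lambda>x. (\<Sum>p\<in>I. c p * Y p x) * indicator (space M) x) \<in> borel_measurable M"
  proof -
    have "(\<lambda>x. \<Sum>p\<in>I. c p * Y p x) \<in> borel_measurable M" by (intro borel_measurable_sum) (simp add: rv)
    then show ?thesis by (intro borel_measurable_times) auto
  qed
  have "ennreal (prob {\<omega>\<in>space M. (\<Sum>p\<in>I. c p * Y p \<omega>) \<ge> rr}) = emeasure M {\<omega>\<in>space M. (\<Sum>p\<in>I. c p * Y p \<omega>) \<ge> rr}"
    by (simp add: emeasure_eq_measure)
  also have "\<dots> \<le> ennreal (exp (-l * rr)) * (\<integral>\<^sup>+x\<in>space M. exp (l * (\<Sum>p\<in>I. c p * Y p x)) \<partial>M)"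
    by (intro Chernoff_ineq_nn_integral_ge l meas) auto
  also have "(\<integral>\<^sup>+x\<in>space M. exp (l * (\<Sum>p\<in>I. c p * Y p x)) \<partial>M) = (\<integral>\<^sup>+x. (\<Prod>p\<in>I. ennreal (exp ((l * c p) * Y p x))) \<partial>M)"
    by (intro nn_integral_cong) (simp_all add: sum_distrib_left exp_sum fin prod_ennreal mult_ac)
  also have "\<dots> = (\<Prod>p\<in>I. \<integral>\<^sup>+x. ennreal (exp ((l * c p) * Y p x)) \<partial>M)"
    by (intro indep_vars_nn_integral fin indep_vars_compose2[OF ind]) auto
  also have "ennreal (exp (-l * rr)) * \<dots> \<le> ennreal (exp (-l * rr)) * (\<Prod>p\<in>I. ennreal (exp ((l * c p)^2 * v p)))"
    by (intro mult_left_mono prod_mono_ennreal mgf) auto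
  also have "\<dots> = ennreal (exp (-l * rr) * (\<Prod>p\<in>I. exp ((l * c p)^2 * v p)))"
    by (simp add: prod_ennreal prod_nonneg flip: ennreal_mult)
  also have "exp (-l * rr) * (\<Prod>p\<in>I. exp ((l * c p)^2 * v p)) = exp (l^2 * d - l * rr)"
    by (simp add: exp_diff exp_minus exp_sum fin d_def sum_distrib_left power_mult_distrib field_simps)
  also have "l^2 * d - l * rr = - (rr^2) / (4 * d)"
    using d by (simp add: l_def field_simps power2_eq_square)
  finally show ?thesis
    by (subst (asm) ennreal_le_iff) (simp_all add: d_def)
qed

lemma chernoff_abs:
  fixes Y :: "'i \<Rightarrow> 'a \<Rightarrow> real" and c v :: "'i \<Rightarrow> real"
  assumes fin: "finite I" and ind: "indep_vars (\<lambda>_. borel) Y I"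
    and mgf: "\<And>p l. p \<in> I \<Longrightarrow> (\<integral>\<^sup>+\<omega>. ennreal (exp (l * Y p \<omega>)) \<partial>M) \<le> ennreal (exp (l^2 * v p))"
    and V: "(\<Sum>p\<in>I. (c p)^2 * v p) > 0" and tau: "rr \<ge> 0"
  shows "prob {\<omega>\<in>space M. \<bar>\<Sum>p\<in>I. c p * Y p \<omega>\<bar> \<ge> rr} \<le> 2 * exp (- (rr^2) / (4 * (\<Sum>p\<in>I. (c p)^2 * v p)))"
proof -
  have rv[measurable]: "p \<in> I \<Longrightarrow> Y p \<in> borel_measurable M" for p
    using ind unfolding indep_vars_def by auto
  have sm[measurable]: "(\<lambda>x. \<Sum>p\<in>I. c p * Y p x) \<in> borel_measurable M"
    by (intro borel_measurable_sum) (simp add: rv)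
  have "{\<omega>\<in>space M. \<bar>\<Sum>p\<in>I. c p * Y p \<omega>\<bar> \<ge> rr} =
        {\<omega>\<in>space M. (\<Sum>p\<in>I. c p * Y p \<omega>) \<ge> rr} \<union> {\<omega>\<in>space M. (\<Sum>p\<in>I. (- c p) * Y p \<omega>) \<ge> rr}"
    by (auto simp: sum_negf)
  also have "prob \<dots> \<le> prob {\<omega>\<in>space M. (\<Sum>p\<in>I. c p * Y p \<omega>) \<ge> rr} + prob {\<omega>\<in>space M. (\<Sum>p\<in>I. (- c p) * Y p \<omega>) \<ge> rr}"
    by (intro measure_Un_le) measurable
  also have "\<dots> \<le> exp (- (rr^2) / (4 * (\<Sum>p\<in>I. (c p)^2 * v p))) + exp (- (rr^2) / (4 * (\<Sum>p\<in>I. (- c p)^2 * v p)))"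
    by (intro add_mono chernoff_sum[OF fin ind mgf _ tau]) (use V in auto)
  finally show ?thesis by simp
qed

end

lemma cheb_pt_inj: "inj_on (cheb_pt L) {..L}"
proof (rule inj_onI)
  fix i j assume i: "i \<in> {..L}" and j: "j \<in> {..L}" and e: "cheb_pt L i = cheb_pt L j"
  show "i = j"
  proof (cases "L = 0")
    case True then show ?thesis using i j by simp
  next
    case False
    have a: "0 \<le> real i * pi / real L" "real i * pi / real L \<le> pi" using i False by (auto simp: field_simps)
    have b: "0 \<le> real j * pi / real L" "real j * pi / real L \<le> pi" using j False by (auto simp: field_simps)
    have "real i * pi / real L = real j * pi / real L"
      using cos_inj_pi[OF a b] e by (simp add: cheb_pt_def)
    then show ?thesis using False by (simp add: field_simps)
  qed
qed

theorem theorem1: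
  fixes M :: "'a measure" and f \<sigma> :: "real \<Rightarrow> real"
    and eps :: "real \<Rightarrow> nat \<Rightarrow> 'a \<Rightarrow> real"
    and N Nh n :: nat and k :: "nat \<Rightarrow> nat" and x t :: real
  assumes "prob_space M"
    and "continuous_on {-1..1} f"
    and "\<forall>y\<in>{-1..1}. \<sigma> y \<ge> 0"
    and "\<forall>y\<in>{-1..1}. \<forall>j. eps y j \<in> borel_measurable M"
    and "prob_space.indep_vars M (\<lambda>_. borel) (\<lambda>(y, j). eps y j) ({-1..1} \<times> UNIV)"
    and "\<forall>y\<in>{-1..1}. \<forall>j. distr M borel (eps y j) = distr M borel (eps y 0)"
    and "\<forall>y\<in>{-1..1}. \<forall>j. integrable M (eps y j) \<and> (\<integral>\<omega>. eps y j \<omega> \<partial>M) = 0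
                         \<and> prob_space.variance M (eps y j) = (\<sigma> y)^2"
    and "\<forall>i\<le>Nh. \<forall>j. subgaussian M (eps (cheb_pt Nh i) j) (\<sigma> (cheb_pt Nh i))"
    and "n < Nh"
    and "\<forall>i\<le>Nh. k i \<ge> 1 \<and>
           real (k i) = real N * (\<sigma> (cheb_pt Nh i))^2 / (\<Sum>l\<le>Nh. (\<sigma> (cheb_pt Nh l))^2)"
    and "x \<in> {-1..1}" and "t > 0"
  shows "measure M {\<omega> \<in> space M.
           \<bar>trunc_approx Nh n (\<lambda>i. f (cheb_pt Nh i) + sample_avg eps Nh k i \<omega>) x - f x\<bar>
           > 2 * t * sqrt (\<Sum>l\<le>Nh. (\<sigma> (cheb_pt Nh l))^2) / sqrt (real N * real Nh) * sqrt (real n + 1)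
             + (sqrt (8 * (real n + 1)) + 1) * sup_dist f (best_approx f n)}
         \<le> 2 * exp (- (t^2) / 2)"
proof -
  interpret P: prob_space M by (rule assms(1))
  define S where "S = (\<Sum>l\<le>Nh. (\<sigma> (cheb_pt Nh l))^2)"
  define K where "K = (sqrt (8 * (real n + 1)) + 1) * sup_dist f (best_approx f n)"
  define A where "A = 2 * t * sqrt S / sqrt (real N * real Nh) * sqrt (real n + 1)"
  have Nh0: "Nh > 0" using assms(9) by simp
  have pt: "cheb_pt Nh i \<in> {-1..1}" for i by (simp add: cheb_pt_def)
  have kS: "k i \<ge> 1" "real (k i) = real N * (\<sigma> (cheb_pt Nh i))^2 / S" if "i \<le> Nh" for i
    using assms(10) that by (auto simp: S_def)
  have S0: "S > 0"
  proof -
    have "S \<ge> 0" unfolding S_def by (intro sum_nonneg) simp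
    moreover have "S \<noteq> 0" using kS[of 0] by auto
    ultimately show ?thesis by simp
  qed
  have N0: "real N > 0" using kS[of 0] by (cases "N = 0") auto
  have sgpos: "\<sigma> (cheb_pt Nh i) > 0" if "i \<le> Nh" for i
  proof -
    have "\<sigma> (cheb_pt Nh i) \<ge> 0" using assms(3) pt by blast
    moreover have "\<sigma> (cheb_pt Nh i) \<noteq> 0" using kS[OF that] by auto
    ultimately show ?thesis by simp
  qed
  have ratio: "(\<sigma> (cheb_pt Nh i))^2 / real (k i) = S / real N" if "i \<le> Nh" for i
    using kS[OF that] sgpos[OF that] S0 N0 by (simp add: field_simps)
  define w where "w i = wt Nh n x i" for i
  define D where "D = (\<Sum>i\<le>Nh. f (cheb_pt Nh i) * w i) - f x"
  define Z where "Z \<omega> = (\<Sum>i\<le>Nh. sample_avg eps Nh k i \<omega> * w i)" for \<omega>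
  have split: "trunc_approx Nh n (\<lambda>i. f (cheb_pt Nh i) + sample_avg eps Nh k i \<omega>) x - f x = Z \<omega> + D" for \<omega>
    unfolding trunc_weights[OF Nh0 less_imp_le[OF assms(9)]] Z_def D_def w_def
    by (simp add: distrib_right sum.distrib)
  have Dbound: "\<bar>D\<bar> \<le> K"
    unfolding D_def K_def w_def by (rule det_bound[OF assms(2) assms(9) assms(11)])
  have A0: "A > 0" unfolding A_def using assms(12) S0 N0 Nh0 by simp
  have sub: "{\<omega> \<in> space M. \<bar>trunc_approx Nh n (\<lambda>i. f (cheb_pt Nh i) + sample_avg eps Nh k i \<omega>) x - f x\<bar> > A + K}
             \<subseteq> {\<omega> \<in> space M. A \<le> \<bar>Z \<omega>\<bar>}"
  proof
    fix \<omega> assume "\<omega> \<in> {\<omega> \<in> space M. \<bar>trunc_approx Nh n (\<lambda>i. f (cheb_pt Nh i) + sample_avg eps Nh k i \<omega>) x - f x\<bar> > A + K}"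
    then have "\<omega> \<in> space M" "\<bar>Z \<omega> + D\<bar> > A + K" by (auto simp: split)
    then show "\<omega> \<in> {\<omega> \<in> space M. A \<le> \<bar>Z \<omega>\<bar>}" using Dbound by auto
  qed
  define J where "J = Sigma {..Nh} (\<lambda>i. {..<k i})"
  define g where "g = (\<lambda>(i, l::nat). (cheb_pt Nh i, l))"
  define I where "I = g ` J"
  define idx where "idx y = inv_into {..Nh} (cheb_pt Nh) y" for y
  define c where "c p = w (idx (fst p)) / real (k (idx (fst p)))" for p :: "real \<times> nat"
  define Y where "Y = (\<lambda>(y, j). eps y j)"
  define v where "v p = (\<sigma> (fst p))^2" for p :: "real \<times> nat"
  have finJ: "finite J" unfolding J_def by simp
  have finI: "finite I" unfolding I_def using finJ by simp
  have injg: "inj_on g J"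
    using cheb_pt_inj[of Nh] unfolding g_def J_def inj_on_def by auto
  have idx: "idx (cheb_pt Nh i) = i" if "i \<le> Nh" for i
    unfolding idx_def using cheb_pt_inj[of Nh] that by simp
  have sumI: "(\<Sum>p\<in>I. F p) = (\<Sum>i\<le>Nh. \<Sum>l<k i. F (cheb_pt Nh i, l))" for F :: "real \<times> nat \<Rightarrow> real"
  proof -
    have "(\<Sum>p\<in>I. F p) = (\<Sum>q\<in>J. F (g q))" unfolding I_def by (rule sum.reindex[OF injg, unfolded comp_def])
    also have "\<dots> = (\<Sum>i\<le>Nh. \<Sum>l<k i. F (cheb_pt Nh i, l))"
      unfolding J_def g_def by (subst sum.Sigma) (auto intro!: sum.cong split: prod.splits)
    finally show ?thesis .
  qed
  have Zeq: "Z \<omega> = (\<Sum>p\<in>I. c p * Y p \<omega>)" for \<omega>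
  proof -
    have "(\<Sum>p\<in>I. c p * Y p \<omega>) = (\<Sum>i\<le>Nh. \<Sum>l<k i. w i / real (k i) * eps (cheb_pt Nh i) l \<omega>)"
      unfolding sumI by (intro sum.cong refl) (simp add: c_def Y_def idx)
    also have "\<dots> = Z \<omega>"
      unfolding Z_def sample_avg_def by (intro sum.cong refl) (simp add: sum_distrib_left sum_divide_distrib mult_ac)
    finally show ?thesis by simp
  qed
  have IJ: "I \<subseteq> {-1..1} \<times> UNIV" unfolding I_def J_def g_def using pt by auto
  have ind: "P.indep_vars (\<lambda>_. borel) Y I"
    unfolding Y_def by (rule P.indep_vars_subset[OF assms(5) IJ])
  have mgf: "(\<integral>\<^sup>+\<omega>. ennreal (exp (l * Y p \<omega>)) \<partial>M) \<le> ennreal (exp (l^2 * v p))" if p: "p \<in> I" for p l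
  proof -
    obtain i j where ij: "i \<le> Nh" "p = (cheb_pt Nh i, j)" using p unfolding I_def J_def g_def by auto
    have a7: "integrable M (eps (cheb_pt Nh i) j)" "(\<integral>\<omega>. eps (cheb_pt Nh i) j \<omega> \<partial>M) = 0"
       "P.variance (eps (cheb_pt Nh i) j) = (\<sigma> (cheb_pt Nh i))^2"
      using assms(7) pt[of i] by blast+
    have "(\<integral>\<^sup>+\<omega>. ennreal (exp (l * eps (cheb_pt Nh i) j \<omega>)) \<partial>M) \<le> ennreal (exp (l^2 * (\<sigma> (cheb_pt Nh i))^2))"
      by (rule P.mgf_sub[OF _ sgpos[OF ij(1)] _ a7]) (use assms(4) assms(8) pt ij in auto)
    then show ?thesis using ij by (simp add: Y_def v_def)
  qed
  define V where "V = (\<Sum>p\<in>I. (c p)^2 * v p)"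
  have Veq: "V = S / real N * (\<Sum>i\<le>Nh. (w i)^2)"
  proof -
    have "V = (\<Sum>i\<le>Nh. \<Sum>l<k i. (w i / real (k i))^2 * (\<sigma> (cheb_pt Nh i))^2)"
      unfolding V_def sumI by (intro sum.cong refl) (simp add: c_def v_def idx)
    also have "\<dots> = (\<Sum>i\<le>Nh. (w i)^2 * ((\<sigma> (cheb_pt Nh i))^2 / real (k i)))"
    proof (intro sum.cong refl)
      fix i assume "i \<in> {..Nh}"
      then have "k i \<ge> 1" using kS by auto
      then show "(\<Sum>l<k i. (w i / real (k i))^2 * (\<sigma> (cheb_pt Nh i))^2) = (w i)^2 * ((\<sigma> (cheb_pt Nh i))^2 / real (k i))"
        by (simp add: power2_eq_square field_simps)
    qed
    also have "\<dots> = (\<Sum>i\<le>Nh. (w i)^2 * (S / real N))"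
      by (intro sum.cong refl) (simp add: ratio)
    also have "\<dots> = S / real N * (\<Sum>i\<le>Nh. (w i)^2)" by (simp add: sum_distrib_left mult_ac)
    finally show ?thesis .
  qed
  have Wb: "(\<Sum>i\<le>Nh. (w i)^2) \<le> 2 * (real n + 1) / real Nh"
    unfolding w_def by (rule wt_sq_bound2[OF assms(9)]) (use assms(11) in auto)
  have Zm: "{\<omega> \<in> space M. A \<le> \<bar>Z \<omega>\<bar>} \<in> sets M"
  proof -
    have "(\<lambda>\<omega>. \<Sum>p\<in>I. c p * Y p \<omega>) \<in> borel_measurable M"
      using ind unfolding P.indep_vars_def by (intro borel_measurable_sum borel_measurable_times) auto
    then show ?thesis unfolding Zeq by measurable
  qed
  have bound: "P.prob {\<omega> \<in> space M. A \<le> \<bar>Z \<omega>\<bar>} \<le> 2 * exp (- (t^2) / 2)"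
  proof (cases "V > 0")
    case False
    have "V \<ge> 0" unfolding V_def v_def by (intro sum_nonneg) simp
    hence "V = 0" using False by simp
    hence "(\<Sum>i\<le>Nh. (w i)^2) = 0" using Veq S0 N0 by simp
    hence "\<forall>i\<in>{..Nh}. (w i)^2 = 0" by (subst (asm) sum_nonneg_eq_0_iff) auto
    hence "Z \<omega> = 0" for \<omega> unfolding Z_def by simp
    then have e: "{\<omega> \<in> space M. A \<le> \<bar>Z \<omega>\<bar>} = {}" using A0 by auto
    have "0 \<le> 2 * exp (- (t^2) / 2)" by simp
    then show ?thesis by (simp only: e measure_empty)
  next
    case True
    have "P.prob {\<omega> \<in> space M. A \<le> \<bar>Z \<omega>\<bar>} = P.prob {\<omega> \<in> space M. A \<le> \<bar>\<Sum>p\<in>I. c p * Y p \<omega>\<bar>}"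
      by (simp add: Zeq)
    also have "\<dots> \<le> 2 * exp (- (A^2) / (4 * V))"
      unfolding V_def by (rule P.chernoff_abs[OF finI ind mgf]) (use True A0 in \<open>auto simp: V_def\<close>)
    also have "\<dots> \<le> 2 * exp (- (t^2) / 2)"
    proof -
      have A2: "A^2 = 4 * t^2 * S * (real n + 1) / (real N * real Nh)"
        unfolding A_def using S0 N0 Nh0 by (simp add: power_mult_distrib power_divide real_sqrt_mult)
      have "2 * t^2 * V \<le> 2 * t^2 * (S / real N * (2 * (real n + 1) / real Nh))"
        unfolding Veq using S0 N0 Wb by (intro mult_left_mono) auto
      also have "\<dots> = A^2" unfolding A2 by (simp add: field_simps)
      finally have "2 * t^2 * V \<le> A^2" .
      hence "- (A^2) / (4 * V) \<le> - (t^2) / 2" using True by (simp add: field_simps)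
      then show ?thesis by simp
    qed
    finally show ?thesis .
  qed
  have "measure M {\<omega> \<in> space M. \<bar>trunc_approx Nh n (\<lambda>i. f (cheb_pt Nh i) + sample_avg eps Nh k i \<omega>) x - f x\<bar> > A + K}
        \<le> P.prob {\<omega> \<in> space M. A \<le> \<bar>Z \<omega>\<bar>}"
    by (rule P.finite_measure_mono[OF sub Zm])
  also note bound
  finally show ?thesis unfolding A_def K_def S_def .
qed

end
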